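(* Let $\mathcal{X}$ be an extension-closed subcategory of $\mathcal{C}$ and $\mathcal{W}$ an $\mathcal{X}$-injective cogenerator for $\mathcal{X}$. Then for every $C\in\widehat{\mathcal{X}}$, $$\mathrm{pd}_{\widehat{\mathcal{W}}}(C)=\mathrm{pd}_{\mathcal{W}}(C)=\mathrm{resdim}_{\mathcal{X}}(C).$$
   Context: $\mathcal{C}=(\mathcal{C},\mathbb{E},\mathfrak{s})$ is an extriangulated category (in the sense of Nakaoka–Palu) with enough projectives and enough injectives; a conflation realizing $\delta\in\mathbb{E}(C,A)$ is written as an $\mathbb{E}$-triangle $A\to B\to C\dashrightarrow$. All subcategories are full, additive, closed under isomorphisms and direct summands. Higher extensions: $\mathbb{E}^1=\mathbb{E}$, $\mathbb{E}^{i+1}(X,Y)=\mathbb{E}(X,\Sigma^iY)\cong\mathbb{E}(\Omega^iX,Y)$. $\mathcal{X}$ is extension-closed if for every $\mathbb{E}$-triangle $A\to B\to C\dashrightarrow$ with $A,C\in\mathcal{X}$ one has $B\in\mathcal{X}$. $\mathcal{W}$ is an $\mathcal{X}$-injective cogenerator for $\mathcal{X}$ if $\mathcal{W}\subseteq\mathcal{X}$, for each $X\in\mathcal{X}$ there is an $\mathbb{E}$-triangle $X\to W\to X'\dashrightarrow$ with $W\in\mathcal{W}$, $X'\in\mathcal{X}$, and $\mathbb{E}^i(X,W)=0$ for all $X\in\mathcal{X}$, $W\in\mathcal{W}$, $i\ge1$. For a subcategory $\mathcal{Z}$ and $n\ge0$, $\widehat{\mathcal{Z}}_n$ is the subcategory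 of objects $C$ for which there exist $\mathbb{E}$-triangles $K_{i+1}\to Z_i\to K_i\dashrightarrow$ ($0\le i\le n-1$) with $K_0=C$, all $Z_i\in\mathcal{Z}$ and $K_n\in\mathcal{Z}$; $\widehat{\mathcal{Z}}=\bigcup_n\widehat{\mathcal{Z}}_n$; $\mathrm{resdim}_{\mathcal{Z}}(C)=\min\{n:C\in\widehat{\mathcal{Z}}_n\}$. $\mathrm{pd}_{\mathcal{Z}}(C)=\min\{n\in\mathbb{N}:\mathbb{E}^i(C,Z)=0\ \forall Z\in\mathcal{Z},\forall i>n\}$. *)

theory Defs
  imports Main "HOL-Library.Extended_Nat"
begin

section \<open>Extriangulated categories (Nakaoka--Palu), encoded concretely\<close>

text \<open>Data of a (pre)additive category C together with a bifunctor E and a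
 realization s.  Morphisms carry their domain and codomain.
  cmp g f     = g o f  (defined when cd f = dm g)
  mzero A B   = the zero morphism A -> B
  Ex C A      = E(C,A), with group operation eadd C A and zero ezero C A
  pull c A d  = c^* d  (c : C' -> C, d in E(C,A), result in E(C',A))
  push a C d  = a_* d  (a : A -> A', d in E(C,A), result in E(C,A'))
  rlz C A d x y  means that the sequence A -x-> B -y-> C belongs to the
                 equivalence class s(d), for d in E(C,A).\<close>

record ('o,'m,'e) ecat =
  Ob :: "'o set"
  Mor :: "'m set"
  dm :: "'m \<Rightarrow> 'o"
  cd :: "'m \<Rightarrow> 'o"
  cmp :: "'m \<Rightarrow> 'm \<Rightarrow> 'm"
  idm :: "'o \<Rightarrow> 'm"
  madd :: "'m \<Rightarrow> 'm \<Rightarrow> 'm"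
  mzero :: "'o \<Rightarrow> 'o \<Rightarrow> 'm"
  Ex :: "'o \<Rightarrow> 'o \<Rightarrow> 'e set"
  eadd :: "'o \<Rightarrow> 'o \<Rightarrow> 'e \<Rightarrow> 'e \<Rightarrow> 'e"
  ezero :: "'o \<Rightarrow> 'o \<Rightarrow> 'e"
  pull :: "'m \<Rightarrow> 'o \<Rightarrow> 'e \<Rightarrow> 'e"
  push :: "'m \<Rightarrow> 'o \<Rightarrow> 'e \<Rightarrow> 'e"
  rlz :: "'o \<Rightarrow> 'o \<Rightarrow> 'e \<Rightarrow> 'm \<Rightarrow> 'm \<Rightarrow> bool"

definition abgrp :: "'a set \<Rightarrow> ('a \<Rightarrow> 'a \<Rightarrow> 'a) \<Rightarrow> 'a \<Rightarrow> bool" where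
  "abgrp S p z \<longleftrightarrow> z \<in> S \<and> (\<forall>x\<in>S. \<forall>y\<in>S. p x y \<in> S)
     \<and> (\<forall>x\<in>S. \<forall>y\<in>S. \<forall>w\<in>S. p (p x y) w = p x (p y w))
     \<and> (\<forall>x\<in>S. \<forall>y\<in>S. p x y = p y x) \<and> (\<forall>x\<in>S. p z x = x)
     \<and> (\<forall>x\<in>S. \<exists>y\<in>S. p x y = z)"

definition Hom :: "('o,'m,'e,'z) ecat_scheme \<Rightarrow> 'o \<Rightarrow> 'o \<Rightarrow> 'm set" where
  "Hom K A B = {f \<in> Mor K. dm K f = A \<and> cd K f = B}"

definition cat_ax :: "('o,'m,'e,'z) ecat_scheme \<Rightarrow> bool" where
  "cat_ax K \<longleftrightarrow>
    (\<forall>f\<in>Mor K. dm K f \<in> Ob K \<and> cd K f \<in> Ob K)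
  \<and> (\<forall>A\<in>Ob K. idm K A \<in> Hom K A A)
  \<and> (\<forall>f\<in>Mor K. \<forall>g\<in>Mor K. cd K f = dm K g \<longrightarrow> cmp K g f \<in> Hom K (dm K f) (cd K g))
  \<and> (\<forall>f\<in>Mor K. \<forall>g\<in>Mor K. \<forall>h\<in>Mor K. cd K f = dm K g \<and> cd K g = dm K h \<longrightarrow>
        cmp K h (cmp K g f) = cmp K (cmp K h g) f)
  \<and> (\<forall>f\<in>Mor K. cmp K (idm K (cd K f)) f = f \<and> cmp K f (idm K (dm K f)) = f)"

definition iso :: "('o,'m,'e,'z) ecat_scheme \<Rightarrow> 'm \<Rightarrow> bool" where
  "iso K f \<longleftrightarrow> f \<in> Mor K \<and> (\<exists>g \<in> Hom K (cd K f) (dm K f).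
      cmp K g f = idm K (dm K f) \<and> cmp K f g = idm K (cd K f))"

definition zero_obj :: "('o,'m,'e,'z) ecat_scheme \<Rightarrow> 'o \<Rightarrow> bool" where
  "zero_obj K Z \<longleftrightarrow> Z \<in> Ob K \<and>
     (\<forall>X\<in>Ob K. Hom K Z X = {mzero K Z X} \<and> Hom K X Z = {mzero K X Z})"

definition biprod :: "('o,'m,'e,'z) ecat_scheme \<Rightarrow> 'o \<Rightarrow> 'o \<Rightarrow> 'o \<Rightarrow> 'm \<Rightarrow> 'm \<Rightarrow> 'm \<Rightarrow> 'm \<Rightarrow> bool" where
  "biprod K A B S i1 i2 p1 p2 \<longleftrightarrow> S \<in> Ob K \<and>
     i1 \<in> Hom K A S \<and> i2 \<in> Hom K B S \<and> p1 \<in> Hom K S A \<and> p2 \<in> Hom K S B \<and>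
     cmp K p1 i1 = idm K A \<and> cmp K p2 i2 = idm K B \<and>
     cmp K p2 i1 = mzero K A B \<and> cmp K p1 i2 = mzero K B A \<and>
     madd K (cmp K i1 p1) (cmp K i2 p2) = idm K S"

definition additive_cat :: "('o,'m,'e,'z) ecat_scheme \<Rightarrow> bool" where
  "additive_cat K \<longleftrightarrow> cat_ax K
  \<and> (\<forall>A\<in>Ob K. \<forall>B\<in>Ob K. abgrp (Hom K A B) (madd K) (mzero K A B))
  \<and> (\<forall>A\<in>Ob K. \<forall>B\<in>Ob K. \<forall>C\<in>Ob K. \<forall>f\<in>Hom K A B. \<forall>f'\<in>Hom K A B. \<forall>g\<in>Hom K B C.
        cmp K g (madd K f f') = madd K (cmp K g f) (cmp K g f'))
  \<and> (\<forall>A\<in>Ob K. \<forall>B\<in>Ob K. \<forall>C\<in>Ob K. \<forall>f\<in>Hom K A B. \<forall>g\<in>Hom K B C. \<forall>g'\<in>Hom K B C.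
        cmp K (madd K g g') f = madd K (cmp K g f) (cmp K g' f))
  \<and> (\<exists>Z. zero_obj K Z)
  \<and> (\<forall>A\<in>Ob K. \<forall>B\<in>Ob K. \<exists>S i1 i2 p1 p2. biprod K A B S i1 i2 p1 p2)"

definition ET1 :: "('o,'m,'e,'z) ecat_scheme \<Rightarrow> bool" where
  "ET1 K \<longleftrightarrow>
    (\<forall>C\<in>Ob K. \<forall>A\<in>Ob K. abgrp (Ex K C A) (eadd K C A) (ezero K C A))
  \<and> (\<forall>c\<in>Mor K. \<forall>A\<in>Ob K. \<forall>d\<in>Ex K (cd K c) A. pull K c A d \<in> Ex K (dm K c) A)
  \<and> (\<forall>a\<in>Mor K. \<forall>C\<in>Ob K. \<forall>d\<in>Ex K C (dm K a). push K a C d \<in> Ex K C (cd K a))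
  \<and> (\<forall>c\<in>Mor K. \<forall>A\<in>Ob K. \<forall>d\<in>Ex K (cd K c) A. \<forall>d'\<in>Ex K (cd K c) A.
        pull K c A (eadd K (cd K c) A d d') = eadd K (dm K c) A (pull K c A d) (pull K c A d'))
  \<and> (\<forall>a\<in>Mor K. \<forall>C\<in>Ob K. \<forall>d\<in>Ex K C (dm K a). \<forall>d'\<in>Ex K C (dm K a).
        push K a C (eadd K C (dm K a) d d') = eadd K C (cd K a) (push K a C d) (push K a C d'))
  \<and> (\<forall>C\<in>Ob K. \<forall>A\<in>Ob K. \<forall>d\<in>Ex K C A. pull K (idm K C) A d = d \<and> push K (idm K A) C d = d)
  \<and> (\<forall>c\<in>Mor K. \<forall>c'\<in>Mor K. \<forall>A\<in>Ob K. cd K c' = dm K c \<longrightarrow>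
        (\<forall>d\<in>Ex K (cd K c) A. pull K (cmp K c c') A d = pull K c' A (pull K c A d)))
  \<and> (\<forall>a\<in>Mor K. \<forall>a'\<in>Mor K. \<forall>C\<in>Ob K. cd K a = dm K a' \<longrightarrow>
        (\<forall>d\<in>Ex K C (dm K a). push K (cmp K a' a) C d = push K a' C (push K a C d)))
  \<and> (\<forall>a\<in>Mor K. \<forall>c\<in>Mor K. \<forall>d\<in>Ex K (cd K c) (dm K a).
        push K a (dm K c) (pull K c (dm K a) d) = pull K c (cd K a) (push K a (cd K c) d))
  \<and> (\<forall>c\<in>Mor K. \<forall>c'\<in>Mor K. \<forall>A\<in>Ob K. dm K c = dm K c' \<and> cd K c = cd K c' \<longrightarrow>
        (\<forall>d\<in>Ex K (cd K c) A. pull K (madd K c c') A d = eadd K (dm K c) A (pull K c A d) (pull K c' A d)))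
  \<and> (\<forall>a\<in>Mor K. \<forall>a'\<in>Mor K. \<forall>C\<in>Ob K. dm K a = dm K a' \<and> cd K a = cd K a' \<longrightarrow>
        (\<forall>d\<in>Ex K C (dm K a). push K (madd K a a') C d = eadd K C (cd K a) (push K a C d) (push K a' C d)))"

definition seq_eq :: "('o,'m,'e,'z) ecat_scheme \<Rightarrow> 'm \<Rightarrow> 'm \<Rightarrow> 'm \<Rightarrow> 'm \<Rightarrow> bool" where
  "seq_eq K x y x' y' \<longleftrightarrow> x \<in> Mor K \<and> y \<in> Mor K \<and> x' \<in> Mor K \<and> y' \<in> Mor K \<and>
     dm K x = dm K x' \<and> cd K y = cd K y' \<and> cd K x = dm K y \<and> cd K x' = dm K y' \<and>
     (\<exists>b\<in>Hom K (cd K x) (cd K x'). iso K b \<and> cmp K b x = x' \<and> cmp K y' b = y)"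

definition realization :: "('o,'m,'e,'z) ecat_scheme \<Rightarrow> bool" where
  "realization K \<longleftrightarrow>
    (\<forall>C\<in>Ob K. \<forall>A\<in>Ob K. \<forall>d\<in>Ex K C A. \<exists>x y. rlz K C A d x y)
  \<and> (\<forall>C A d x y. rlz K C A d x y \<longrightarrow> C \<in> Ob K \<and> A \<in> Ob K \<and> d \<in> Ex K C A \<and>
        x \<in> Mor K \<and> y \<in> Mor K \<and> dm K x = A \<and> cd K x = dm K y \<and> cd K y = C)
  \<and> (\<forall>C A d x y x' y'. rlz K C A d x y \<and> rlz K C A d x' y' \<longrightarrow> seq_eq K x y x' y')
  \<and> (\<forall>C A d x y x' y'. rlz K C A d x y \<and> seq_eq K x y x' y' \<longrightarrow> rlz K C A d x' y')
  \<and> (\<forall>C A d x y C' A' d' x' y' a c.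
        rlz K C A d x y \<and> rlz K C' A' d' x' y' \<and> a \<in> Hom K A A' \<and> c \<in> Hom K C C' \<and>
        push K a C d = pull K c A' d' \<longrightarrow>
        (\<exists>b\<in>Hom K (cd K x) (cd K x'). cmp K b x = cmp K x' a \<and> cmp K c y = cmp K y' b))"

text \<open>(ET2), part 2: s is additive: s(0) is the split sequence and
  s(d (+) d') = s(d) (+) s(d').\<close>
definition additive_realization :: "('o,'m,'e,'z) ecat_scheme \<Rightarrow> bool" where
  "additive_realization K \<longleftrightarrow>
    (\<forall>A C S i1 i2 p1 p2. A \<in> Ob K \<and> C \<in> Ob K \<and> biprod K A C S i1 i2 p1 p2 \<longrightarrow>
        rlz K C A (ezero K C A) i1 p2)
  \<and> (\<forall>A A' B B' C C' SA SB SC iA iA' pA pA' iB iB' pB pB' iC iC' pC pC' d d' x y x' y'.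
        biprod K A A' SA iA iA' pA pA' \<and> biprod K B B' SB iB iB' pB pB' \<and>
        biprod K C C' SC iC iC' pC pC' \<and>
        rlz K C A d x y \<and> rlz K C' A' d' x' y' \<and> cd K x = B \<and> cd K x' = B' \<longrightarrow>
        rlz K SC SA
          (eadd K SC SA (push K iA SC (pull K pC A d)) (push K iA' SC (pull K pC' A' d')))
          (madd K (cmp K iB (cmp K x pA)) (cmp K iB' (cmp K x' pA')))
          (madd K (cmp K iC (cmp K y pB)) (cmp K iC' (cmp K y' pB'))))"

definition ET3 :: "('o,'m,'e,'z) ecat_scheme \<Rightarrow> bool" where
  "ET3 K \<longleftrightarrow> (\<forall>C A d x y C' A' d' x' y' a b.
     rlz K C A d x y \<and> rlz K C' A' d' x' y' \<and> a \<in> Hom K A A' \<and>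
     b \<in> Hom K (cd K x) (cd K x') \<and> cmp K x' a = cmp K b x \<longrightarrow>
     (\<exists>c\<in>Hom K C C'. cmp K c y = cmp K y' b \<and> push K a C d = pull K c A' d'))"

definition ET3op :: "('o,'m,'e,'z) ecat_scheme \<Rightarrow> bool" where
  "ET3op K \<longleftrightarrow> (\<forall>C A d x y C' A' d' x' y' b c.
     rlz K C A d x y \<and> rlz K C' A' d' x' y' \<and> c \<in> Hom K C C' \<and>
     b \<in> Hom K (cd K x) (cd K x') \<and> cmp K c y = cmp K y' b \<longrightarrow>
     (\<exists>a\<in>Hom K A A'. cmp K x' a = cmp K b x \<and> push K a C d = pull K c A' d'))"

definition ET4 :: "('o,'m,'e,'z) ecat_scheme \<Rightarrow> bool" where
  "ET4 K \<longleftrightarrow> (\<forall>A B C D F d d' f f' g g'.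
     rlz K D A d f f' \<and> rlz K F B d' g g' \<and> cd K f = B \<and> cd K g = C \<longrightarrow>
     (\<exists>E h h' e1 e2 d''. E \<in> Ob K \<and> h \<in> Hom K A C \<and> h' \<in> Hom K C E \<and>
        e1 \<in> Hom K D E \<and> e2 \<in> Hom K E F \<and>
        h = cmp K g f \<and> cmp K h' g = cmp K e1 f' \<and> cmp K e2 h' = g' \<and>
        rlz K E A d'' h h' \<and>
        rlz K F D (push K f' F d') e1 e2 \<and>
        pull K e1 A d'' = d \<and>
        push K f E d'' = pull K e2 B d'))"

definition ET4op :: "('o,'m,'e,'z) ecat_scheme \<Rightarrow> bool" where
  "ET4op K \<longleftrightarrow> (\<forall>A B C D F d d' f f' g g'.
     rlz K A D d f' f \<and> rlz K B F d' g' g \<and> cd K f' = B \<and> cd K g' = C \<longrightarrow>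
     (\<exists>E h h' e1 e2 d''. E \<in> Ob K \<and> h \<in> Hom K C A \<and> h' \<in> Hom K E C \<and>
        e1 \<in> Hom K E D \<and> e2 \<in> Hom K F E \<and>
        h = cmp K f g \<and> cmp K g h' = cmp K f' e1 \<and> cmp K h' e2 = g' \<and>
        rlz K A E d'' h' h \<and>
        rlz K D F (pull K f' F d') e2 e1 \<and>
        push K e1 A d'' = d \<and>
        pull K f E d'' = push K e2 B d'))"

definition extriangulated :: "('o,'m,'e,'z) ecat_scheme \<Rightarrow> bool" where
  "extriangulated K \<longleftrightarrow> additive_cat K \<and> ET1 K \<and> realization K \<and>
     additive_realization K \<and> ET3 K \<and> ET3op K \<and> ET4 K \<and> ET4op K"

section \<open>Projectives, injectives, higher extensions\<close>

definition projective :: "('o,'m,'e,'z) ecat_scheme \<Rightarrow> 'o \<Rightarrow> bool" where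
  "projective K P \<longleftrightarrow> P \<in> Ob K \<and> (\<forall>X\<in>Ob K. Ex K P X = {ezero K P X})"

definition injective :: "('o,'m,'e,'z) ecat_scheme \<Rightarrow> 'o \<Rightarrow> bool" where
  "injective K I \<longleftrightarrow> I \<in> Ob K \<and> (\<forall>X\<in>Ob K. Ex K X I = {ezero K X I})"

definition enough_projectives :: "('o,'m,'e,'z) ecat_scheme \<Rightarrow> bool" where
  "enough_projectives K \<longleftrightarrow> (\<forall>C\<in>Ob K. \<exists>A d x y. rlz K C A d x y \<and> projective K (cd K x))"

definition enough_injectives :: "('o,'m,'e,'z) ecat_scheme \<Rightarrow> bool" where
  "enough_injectives K \<longleftrightarrow> (\<forall>A\<in>Ob K. \<exists>C d x y. rlz K C A d x y \<and> injective K (cd K x))"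

text \<open>Ks 0 = X, and E-triangles Ks (k+1) -> P_k -> Ks k with P_k projective for k < n,
  so that Ks n is an n-th syzygy Omega^n X.\<close>
definition syz_chain :: "('o,'m,'e,'z) ecat_scheme \<Rightarrow> nat \<Rightarrow> (nat \<Rightarrow> 'o) \<Rightarrow> bool" where
  "syz_chain K n Ks \<longleftrightarrow> (\<forall>k<n. \<exists>d x y. rlz K (Ks k) (Ks (Suc k)) d x y \<and> projective K (cd K x))"

text \<open>Vanishing of E^i(X,Y) = E(Omega^(i-1) X, Y) for i >= 1.  (Independent of the
  choice of syzygies.)\<close>
definition ext_vanish :: "('o,'m,'e,'z) ecat_scheme \<Rightarrow> nat \<Rightarrow> 'o \<Rightarrow> 'o \<Rightarrow> bool" where
  "ext_vanish K i X Y \<longleftrightarrow> (\<exists>Ks. Ks 0 = X \<and> syz_chain K (i - 1) Ks \<and>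
      Ex K (Ks (i - 1)) Y = {ezero K (Ks (i - 1)) Y})"

section \<open>Subcategories, resolutions, dimensions\<close>

definition subcat :: "('o,'m,'e,'z) ecat_scheme \<Rightarrow> 'o set \<Rightarrow> bool" where
  "subcat K Z \<longleftrightarrow> Z \<subseteq> Ob K \<and> (\<exists>Z0\<in>Z. zero_obj K Z0)
   \<and> (\<forall>A B S i1 i2 p1 p2. A \<in> Z \<and> B \<in> Z \<and> biprod K A B S i1 i2 p1 p2 \<longrightarrow> S \<in> Z)
   \<and> (\<forall>f. iso K f \<and> dm K f \<in> Z \<longrightarrow> cd K f \<in> Z)
   \<and> (\<forall>A B S i1 i2 p1 p2. A \<in> Ob K \<and> B \<in> Ob K \<and> biprod K A B S i1 i2 p1 p2 \<and> S \<in> Z \<longrightarrow> A \<in> Z \<and> B \<in> Z)"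

definition extension_closed :: "('o,'m,'e,'z) ecat_scheme \<Rightarrow> 'o set \<Rightarrow> bool" where
  "extension_closed K X \<longleftrightarrow> (\<forall>C A d x y. rlz K C A d x y \<and> A \<in> X \<and> C \<in> X \<longrightarrow> cd K x \<in> X)"

definition inj_cogenerator :: "('o,'m,'e,'z) ecat_scheme \<Rightarrow> 'o set \<Rightarrow> 'o set \<Rightarrow> bool" where
  "inj_cogenerator K X W \<longleftrightarrow> W \<subseteq> X
   \<and> (\<forall>A\<in>X. \<exists>A' d x y. rlz K A' A d x y \<and> cd K x \<in> W \<and> A' \<in> X)
   \<and> (\<forall>A\<in>X. \<forall>V\<in>W. \<forall>i\<ge>1. ext_vanish K i A V)"

definition in_hat :: "('o,'m,'e,'z) ecat_scheme \<Rightarrow> 'o set \<Rightarrow> nat \<Rightarrow> 'o \<Rightarrow> bool" where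
  "in_hat K Z n C \<longleftrightarrow> (\<exists>Ks. Ks 0 = C \<and> Ks n \<in> Z \<and>
     (\<forall>i<n. \<exists>d x y. rlz K (Ks i) (Ks (Suc i)) d x y \<and> cd K x \<in> Z))"

definition hat :: "('o,'m,'e,'z) ecat_scheme \<Rightarrow> 'o set \<Rightarrow> 'o set" where
  "hat K Z = {C. \<exists>n. in_hat K Z n C}"

definition resdim :: "('o,'m,'e,'z) ecat_scheme \<Rightarrow> 'o set \<Rightarrow> 'o \<Rightarrow> enat" where
  "resdim K Z C = (if \<exists>n. in_hat K Z n C then enat (LEAST n. in_hat K Z n C) else \<infinity>)"

definition pd :: "('o,'m,'e,'z) ecat_scheme \<Rightarrow> 'o set \<Rightarrow> 'o \<Rightarrow> enat" where
  "pd K Z C = (if \<exists>n. \<forall>V\<in>Z. \<forall>i>n. ext_vanish K i C V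
     then enat (LEAST n. \<forall>V\<in>Z. \<forall>i>n. ext_vanish K i C V) else \<infinity>)"

end

theory Submission
  imports Defs
begin


lemma abgrp_closed: "abgrp S p z \<Longrightarrow> x \<in> S \<Longrightarrow> y \<in> S \<Longrightarrow> p x y \<in> S"
  unfolding abgrp_def by blast
lemma abgrp_zero: "abgrp S p z \<Longrightarrow> z \<in> S" unfolding abgrp_def by blast
lemma abgrp_assoc: "abgrp S p z \<Longrightarrow> x \<in> S \<Longrightarrow> y \<in> S \<Longrightarrow> w \<in> S \<Longrightarrow> p (p x y) w = p x (p y w)"
  unfolding abgrp_def by blast
lemma abgrp_comm: "abgrp S p z \<Longrightarrow> x \<in> S \<Longrightarrow> y \<in> S \<Longrightarrow> p x y = p y x"
  unfolding abgrp_def by blast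
lemma abgrp_lid: "abgrp S p z \<Longrightarrow> x \<in> S \<Longrightarrow> p z x = x"
  unfolding abgrp_def by blast
lemma abgrp_rid: "abgrp S p z \<Longrightarrow> x \<in> S \<Longrightarrow> p x z = x"
  unfolding abgrp_def by (metis)
lemma abgrp_inv: "abgrp S p z \<Longrightarrow> x \<in> S \<Longrightarrow> \<exists>y\<in>S. p x y = z"
  unfolding abgrp_def by blast
lemma abgrp_cancel: assumes G: "abgrp S p z" and x: "x \<in> S" and y: "y \<in> S" and e: "p x y = x"
  shows "y = z"
proof -
  obtain u where u: "u \<in> S" "p x u = z" using abgrp_inv[OF G x] by blast
  have "p u (p x y) = p u x" using e by simp
  also have "\<dots> = z" using u abgrp_comm[OF G] x by metis
  finally have "z = p (p u x) y" using abgrp_assoc[OF G u(1) x y] by simp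
  also have "p u x = z" using u abgrp_comm[OF G] x by metis
  finally show ?thesis using abgrp_lid[OF G y] by simp
qed

definition ginv :: "'a set \<Rightarrow> ('a \<Rightarrow> 'a \<Rightarrow> 'a) \<Rightarrow> 'a \<Rightarrow> 'a \<Rightarrow> 'a" where
  "ginv S p z x = (SOME y. y \<in> S \<and> p x y = z)"
lemma ginv: "abgrp S p z \<Longrightarrow> x \<in> S \<Longrightarrow> ginv S p z x \<in> S \<and> p x (ginv S p z x) = z"
  unfolding ginv_def by (rule someI_ex) (metis abgrp_inv)

locale xc =
  fixes K :: "('o,'m,'e) ecat"
  assumes ext: "extriangulated K"
begin

abbreviation H where "H \<equiv> Hom K"
abbreviation cmpx (infixl "\<cdot>" 70) where "g \<cdot> f \<equiv> cmp K g f"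
abbreviation plx (infixl "\<oplus>" 65) where "f \<oplus> g \<equiv> madd K f g"
abbreviation z where "z \<equiv> mzero K"

lemma addc: "additive_cat K" using ext unfolding extriangulated_def by blast
lemma catax: "cat_ax K" using addc unfolding additive_cat_def by blast
lemma et1: "ET1 K" using ext unfolding extriangulated_def by blast
lemma rea: "realization K" using ext unfolding extriangulated_def by blast
lemma area: "additive_realization K" using ext unfolding extriangulated_def by blast
lemma et3: "ET3 K" using ext unfolding extriangulated_def by blast
lemma et3op: "ET3op K" using ext unfolding extriangulated_def by blast
lemma et4: "ET4 K" using ext unfolding extriangulated_def by blast
lemma et4op: "ET4op K" using ext unfolding extriangulated_def by blast

lemma HomI: "f \<in> Mor K \<Longrightarrow> dm K f = A \<Longrightarrow> cd K f = B \<Longrightarrow> f \<in> H A B" unfolding Hom_def by simp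
lemma HomD: "f \<in> H A B \<Longrightarrow> f \<in> Mor K \<and> dm K f = A \<and> cd K f = B" unfolding Hom_def by simp
lemma ca1: "\<forall>f\<in>Mor K. dm K f \<in> Ob K \<and> cd K f \<in> Ob K"
  using catax unfolding cat_ax_def by (elim conjE) assumption
lemma ca2: "\<forall>A\<in>Ob K. idm K A \<in> Hom K A A"
  using catax unfolding cat_ax_def by (elim conjE) assumption
lemma ca3: "\<forall>f\<in>Mor K. \<forall>g\<in>Mor K. cd K f = dm K g \<longrightarrow> cmp K g f \<in> Hom K (dm K f) (cd K g)"
  using catax unfolding cat_ax_def by (elim conjE) assumption
lemma ca4: "\<forall>f\<in>Mor K. \<forall>g\<in>Mor K. \<forall>h\<in>Mor K. cd K f = dm K g \<and> cd K g = dm K h \<longrightarrow>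
        cmp K h (cmp K g f) = cmp K (cmp K h g) f"
  using catax unfolding cat_ax_def by (elim conjE) assumption
lemma ca5: "\<forall>f\<in>Mor K. cmp K (idm K (cd K f)) f = f \<and> cmp K f (idm K (dm K f)) = f"
  using catax unfolding cat_ax_def by (elim conjE) assumption
lemma Hom_ob: "f \<in> H A B \<Longrightarrow> A \<in> Ob K \<and> B \<in> Ob K"
  using ca1 HomD by blast
lemma Mor_ob: "f \<in> Mor K \<Longrightarrow> dm K f \<in> Ob K \<and> cd K f \<in> Ob K"
  using ca1 by blast
lemma Mor_Hom: "f \<in> Mor K \<Longrightarrow> f \<in> H (dm K f) (cd K f)" unfolding Hom_def by simp
lemma id_hom: "A \<in> Ob K \<Longrightarrow> idm K A \<in> H A A"
  using ca2 by blast
lemma cmp_hom: "f \<in> H A B \<Longrightarrow> g \<in> H B C \<Longrightarrow> g \<cdot> f \<in> H A C"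
  using ca3 HomD by metis
lemma assoc: "f \<in> H A B \<Longrightarrow> g \<in> H B C \<Longrightarrow> h \<in> H C D \<Longrightarrow> h \<cdot> (g \<cdot> f) = (h \<cdot> g) \<cdot> f"
  using ca4 HomD by metis
lemma idl: "f \<in> H A B \<Longrightarrow> idm K B \<cdot> f = f"
  using ca5 HomD by metis
lemma idr: "f \<in> H A B \<Longrightarrow> f \<cdot> idm K A = f"
  using ca5 HomD by metis

lemma habgrp_all: "\<forall>A\<in>Ob K. \<forall>B\<in>Ob K. abgrp (Hom K A B) (madd K) (mzero K A B)"
  using addc unfolding additive_cat_def by (elim conjE) assumption
lemma habgrp: "A \<in> Ob K \<Longrightarrow> B \<in> Ob K \<Longrightarrow> abgrp (H A B) (madd K) (z A B)"
  using habgrp_all by blast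
lemma zhom: "A \<in> Ob K \<Longrightarrow> B \<in> Ob K \<Longrightarrow> z A B \<in> H A B"
  by (rule abgrp_zero[OF habgrp])
lemma hg: "f \<in> H A B \<Longrightarrow> abgrp (H A B) (madd K) (z A B)"
  using habgrp Hom_ob by blast
lemma addhom: "f \<in> H A B \<Longrightarrow> g \<in> H A B \<Longrightarrow> f \<oplus> g \<in> H A B"
  by (rule abgrp_closed[OF hg])
lemma add_assoc: "f \<in> H A B \<Longrightarrow> g \<in> H A B \<Longrightarrow> h \<in> H A B \<Longrightarrow> (f \<oplus> g) \<oplus> h = f \<oplus> (g \<oplus> h)"
  by (rule abgrp_assoc[OF hg])
lemma add_comm: "f \<in> H A B \<Longrightarrow> g \<in> H A B \<Longrightarrow> f \<oplus> g = g \<oplus> f"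
  by (rule abgrp_comm[OF hg])
lemma add_zl: "f \<in> H A B \<Longrightarrow> z A B \<oplus> f = f"
  by (rule abgrp_lid[OF hg])
lemma add_zr: "f \<in> H A B \<Longrightarrow> f \<oplus> z A B = f"
  by (rule abgrp_rid[OF hg])
lemma add_cancel: "f \<in> H A B \<Longrightarrow> g \<in> H A B \<Longrightarrow> f \<oplus> g = f \<Longrightarrow> g = z A B"
  by (rule abgrp_cancel[OF hg])
lemma distl_all: "\<forall>A\<in>Ob K. \<forall>B\<in>Ob K. \<forall>C\<in>Ob K. \<forall>f\<in>Hom K A B. \<forall>f'\<in>Hom K A B. \<forall>g\<in>Hom K B C.
        cmp K g (madd K f f') = madd K (cmp K g f) (cmp K g f')"
  using addc unfolding additive_cat_def by (elim conjE) assumption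
lemma distr_all: "\<forall>A\<in>Ob K. \<forall>B\<in>Ob K. \<forall>C\<in>Ob K. \<forall>f\<in>Hom K A B. \<forall>g\<in>Hom K B C. \<forall>g'\<in>Hom K B C.
        cmp K (madd K g g') f = madd K (cmp K g f) (cmp K g' f)"
  using addc unfolding additive_cat_def by (elim conjE) assumption
lemma distl: assumes "f \<in> H A B" "f' \<in> H A B" "g \<in> H B C" shows "g \<cdot> (f \<oplus> f') = g \<cdot> f \<oplus> g \<cdot> f'"
proof -
  have "A \<in> Ob K" "B \<in> Ob K" "C \<in> Ob K" using Hom_ob assms by blast+
  thus ?thesis using distl_all assms by blast
qed
lemma distr: assumes "f \<in> H A B" "g \<in> H B C" "g' \<in> H B C" shows "(g \<oplus> g') \<cdot> f = g \<cdot> f \<oplus> g' \<cdot> f"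
proof -
  have "A \<in> Ob K" "B \<in> Ob K" "C \<in> Ob K" using Hom_ob assms by blast+
  thus ?thesis using distr_all assms by blast
qed

definition mneg where "mneg A B f = ginv (H A B) (madd K) (z A B) f"
lemma mneg: "f \<in> H A B \<Longrightarrow> mneg A B f \<in> H A B \<and> f \<oplus> mneg A B f = z A B"
  unfolding mneg_def by (rule ginv[OF hg])

lemma cz_r: assumes "f \<in> H A B" "C \<in> Ob K" shows "z B C \<cdot> f = z A C"
proof -
  have B: "B \<in> Ob K" using Hom_ob assms by blast
  have h: "z B C \<cdot> f \<in> H A C" using cmp_hom assms zhom B by blast
  have "z B C \<cdot> f = (z B C \<oplus> z B C) \<cdot> f" using add_zl zhom B assms by metis
  also have "\<dots> = z B C \<cdot> f \<oplus> z B C \<cdot> f" using distr assms zhom B by blast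
  finally show ?thesis using add_cancel h by metis
qed
lemma cz_l: assumes "f \<in> H A B" "C \<in> Ob K" shows "f \<cdot> z C A = z C B"
proof -
  have A: "A \<in> Ob K" using Hom_ob assms by blast
  have h: "f \<cdot> z C A \<in> H C B" using cmp_hom assms zhom A by blast
  have "f \<cdot> z C A = f \<cdot> (z C A \<oplus> z C A)" using add_zl zhom A assms by metis
  also have "\<dots> = f \<cdot> z C A \<oplus> f \<cdot> z C A" using distl assms zhom A by blast
  finally show ?thesis using add_cancel h by metis
qed

end



context xc begin

lemma zobj_ex: "\<exists>Z. zero_obj K Z" using addc unfolding additive_cat_def by (elim conjE) assumption
definition Z0 where "Z0 = (SOME Z. zero_obj K Z)"
lemma Z0: "zero_obj K Z0" unfolding Z0_def by (rule someI_ex, rule zobj_ex)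
lemma Z0_ob: "Z0 \<in> Ob K" using Z0 unfolding zero_obj_def by blast
lemma from_Z0: "X \<in> Ob K \<Longrightarrow> f \<in> H Z0 X \<Longrightarrow> f = z Z0 X" using Z0 unfolding zero_obj_def by blast
lemma to_Z0: "X \<in> Ob K \<Longrightarrow> f \<in> H X Z0 \<Longrightarrow> f = z X Z0" using Z0 unfolding zero_obj_def by blast
lemma thru_Z0: assumes "f \<in> H A Z0" "g \<in> H Z0 B" shows "g \<cdot> f = z A B"
proof -
  have "A \<in> Ob K" "B \<in> Ob K" using assms Hom_ob by blast+
  hence "f = z A Z0" using to_Z0 assms by blast
  thus ?thesis using cz_l assms \<open>A \<in> Ob K\<close> by simp
qed
lemma idZ0: "idm K Z0 = z Z0 Z0" using from_Z0 id_hom Z0_ob by blast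

lemma t1: "\<forall>C\<in>Ob K. \<forall>A\<in>Ob K. abgrp (Ex K C A) (eadd K C A) (ezero K C A)"
  using et1 unfolding ET1_def by (elim conjE) assumption
lemma t2: "\<forall>c\<in>Mor K. \<forall>A\<in>Ob K. \<forall>d\<in>Ex K (cd K c) A. pull K c A d \<in> Ex K (dm K c) A"
  using et1 unfolding ET1_def by (elim conjE) assumption
lemma t3: "\<forall>a\<in>Mor K. \<forall>C\<in>Ob K. \<forall>d\<in>Ex K C (dm K a). push K a C d \<in> Ex K C (cd K a)"
  using et1 unfolding ET1_def by (elim conjE) assumption
lemma t4: "\<forall>c\<in>Mor K. \<forall>A\<in>Ob K. \<forall>d\<in>Ex K (cd K c) A. \<forall>d'\<in>Ex K (cd K c) A.
        pull K c A (eadd K (cd K c) A d d') = eadd K (dm K c) A (pull K c A d) (pull K c A d')"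
  using et1 unfolding ET1_def by (elim conjE) assumption
lemma t5: "\<forall>a\<in>Mor K. \<forall>C\<in>Ob K. \<forall>d\<in>Ex K C (dm K a). \<forall>d'\<in>Ex K C (dm K a).
        push K a C (eadd K C (dm K a) d d') = eadd K C (cd K a) (push K a C d) (push K a C d')"
  using et1 unfolding ET1_def by (elim conjE) assumption
lemma t6: "\<forall>C\<in>Ob K. \<forall>A\<in>Ob K. \<forall>d\<in>Ex K C A. pull K (idm K C) A d = d \<and> push K (idm K A) C d = d"
  using et1 unfolding ET1_def by (elim conjE) assumption
lemma t7: "\<forall>c\<in>Mor K. \<forall>c'\<in>Mor K. \<forall>A\<in>Ob K. cd K c' = dm K c \<longrightarrow>
        (\<forall>d\<in>Ex K (cd K c) A. pull K (cmp K c c') A d = pull K c' A (pull K c A d))"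
  using et1 unfolding ET1_def by (elim conjE) assumption
lemma t8: "\<forall>a\<in>Mor K. \<forall>a'\<in>Mor K. \<forall>C\<in>Ob K. cd K a = dm K a' \<longrightarrow>
        (\<forall>d\<in>Ex K C (dm K a). push K (cmp K a' a) C d = push K a' C (push K a C d))"
  using et1 unfolding ET1_def by (elim conjE) assumption
lemma t10: "\<forall>c\<in>Mor K. \<forall>c'\<in>Mor K. \<forall>A\<in>Ob K. dm K c = dm K c' \<and> cd K c = cd K c' \<longrightarrow>
        (\<forall>d\<in>Ex K (cd K c) A. pull K (madd K c c') A d = eadd K (dm K c) A (pull K c A d) (pull K c' A d))"
  using et1 unfolding ET1_def by (elim conjE) assumption
lemma t11: "\<forall>a\<in>Mor K. \<forall>a'\<in>Mor K. \<forall>C\<in>Ob K. dm K a = dm K a' \<and> cd K a = cd K a' \<longrightarrow>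
        (\<forall>d\<in>Ex K C (dm K a). push K (madd K a a') C d = eadd K C (cd K a) (push K a C d) (push K a' C d))"
  using et1 unfolding ET1_def by (elim conjE) assumption

lemma eg: "C \<in> Ob K \<Longrightarrow> A \<in> Ob K \<Longrightarrow> abgrp (Ex K C A) (eadd K C A) (ezero K C A)"
  by (rule t1[rule_format])
lemma ez_in: "C \<in> Ob K \<Longrightarrow> A \<in> Ob K \<Longrightarrow> ezero K C A \<in> Ex K C A"
  by (rule abgrp_zero[OF eg])

lemma pull_in: "c \<in> H C' C \<Longrightarrow> A \<in> Ob K \<Longrightarrow> d \<in> Ex K C A \<Longrightarrow> pull K c A d \<in> Ex K C' A"
  using t2 HomD by metis
lemma push_in: "a \<in> H A A' \<Longrightarrow> C \<in> Ob K \<Longrightarrow> d \<in> Ex K C A \<Longrightarrow> push K a C d \<in> Ex K C A'"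
  using t3 HomD by metis
lemma pull_add: "c \<in> H C' C \<Longrightarrow> A \<in> Ob K \<Longrightarrow> d \<in> Ex K C A \<Longrightarrow> d' \<in> Ex K C A \<Longrightarrow>
   pull K c A (eadd K C A d d') = eadd K C' A (pull K c A d) (pull K c A d')"
  using t4 HomD by metis
lemma push_add: "a \<in> H A A' \<Longrightarrow> C \<in> Ob K \<Longrightarrow> d \<in> Ex K C A \<Longrightarrow> d' \<in> Ex K C A \<Longrightarrow>
   push K a C (eadd K C A d d') = eadd K C A' (push K a C d) (push K a C d')"
  using t5 HomD by metis
lemma pull_id: "C \<in> Ob K \<Longrightarrow> A \<in> Ob K \<Longrightarrow> d \<in> Ex K C A \<Longrightarrow> pull K (idm K C) A d = d"
  using t6 by blast
lemma push_id: "C \<in> Ob K \<Longrightarrow> A \<in> Ob K \<Longrightarrow> d \<in> Ex K C A \<Longrightarrow> push K (idm K A) C d = d"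
  using t6 by blast
lemma pull_cmp: "c' \<in> H C'' C' \<Longrightarrow> c \<in> H C' C \<Longrightarrow> A \<in> Ob K \<Longrightarrow> d \<in> Ex K C A \<Longrightarrow>
   pull K (c \<cdot> c') A d = pull K c' A (pull K c A d)"
  using t7 HomD by metis
lemma push_cmp: "a \<in> H A A' \<Longrightarrow> a' \<in> H A' A'' \<Longrightarrow> C \<in> Ob K \<Longrightarrow> d \<in> Ex K C A \<Longrightarrow>
   push K (a' \<cdot> a) C d = push K a' C (push K a C d)"
  using t8 HomD by metis
lemma pull_madd: "c \<in> H C' C \<Longrightarrow> c' \<in> H C' C \<Longrightarrow> A \<in> Ob K \<Longrightarrow> d \<in> Ex K C A \<Longrightarrow>
   pull K (c \<oplus> c') A d = eadd K C' A (pull K c A d) (pull K c' A d)"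
  using t10 HomD by metis
lemma push_madd: "a \<in> H A A' \<Longrightarrow> a' \<in> H A A' \<Longrightarrow> C \<in> Ob K \<Longrightarrow> d \<in> Ex K C A \<Longrightarrow>
   push K (a \<oplus> a') C d = eadd K C A' (push K a C d) (push K a' C d)"
  using t11 HomD by metis

lemma pull_ez: assumes "c \<in> H C' C" "A \<in> Ob K" shows "pull K c A (ezero K C A) = ezero K C' A"
proof -
  have ob: "C \<in> Ob K" "C' \<in> Ob K" using assms Hom_ob by blast+
  have G: "abgrp (Ex K C A) (eadd K C A) (ezero K C A)" using eg[OF ob(1) assms(2)] .
  have G': "abgrp (Ex K C' A) (eadd K C' A) (ezero K C' A)" using eg[OF ob(2) assms(2)] .
  have zi: "ezero K C A \<in> Ex K C A" using abgrp_zero[OF G] .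
  have pi: "pull K c A (ezero K C A) \<in> Ex K C' A" using pull_in assms zi by blast
  have "pull K c A (ezero K C A) = pull K c A (eadd K C A (ezero K C A) (ezero K C A))"
    using abgrp_lid[OF G zi] by simp
  also have "\<dots> = eadd K C' A (pull K c A (ezero K C A)) (pull K c A (ezero K C A))"
    using pull_add assms zi by blast
  finally show ?thesis using abgrp_cancel[OF G' pi pi] by simp
qed
lemma push_ez: assumes "a \<in> H A A'" "C \<in> Ob K" shows "push K a C (ezero K C A) = ezero K C A'"
proof -
  have ob: "A \<in> Ob K" "A' \<in> Ob K" using assms Hom_ob by blast+
  have G: "abgrp (Ex K C A) (eadd K C A) (ezero K C A)" using eg[OF assms(2) ob(1)] .
  have G': "abgrp (Ex K C A') (eadd K C A') (ezero K C A')" using eg[OF assms(2) ob(2)] .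
  have zi: "ezero K C A \<in> Ex K C A" using abgrp_zero[OF G] .
  have pi: "push K a C (ezero K C A) \<in> Ex K C A'" using push_in assms zi by blast
  have "push K a C (ezero K C A) = push K a C (eadd K C A (ezero K C A) (ezero K C A))"
    using abgrp_lid[OF G zi] by simp
  also have "\<dots> = eadd K C A' (push K a C (ezero K C A)) (push K a C (ezero K C A))"
    using push_add assms zi by blast
  finally show ?thesis using abgrp_cancel[OF G' pi pi] by simp
qed
lemma pull_zm: assumes "C' \<in> Ob K" "C \<in> Ob K" "A \<in> Ob K" "d \<in> Ex K C A"
  shows "pull K (z C' C) A d = ezero K C' A"
proof -
  have zh: "z C' C \<in> H C' C" using zhom assms by blast
  have G': "abgrp (Ex K C' A) (eadd K C' A) (ezero K C' A)" using eg[OF assms(1) assms(3)] .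
  have pi: "pull K (z C' C) A d \<in> Ex K C' A" using pull_in zh assms by blast
  have "pull K (z C' C) A d = pull K (z C' C \<oplus> z C' C) A d" using add_zl zh by simp
  also have "\<dots> = eadd K C' A (pull K (z C' C) A d) (pull K (z C' C) A d)"
    using pull_madd zh assms by blast
  finally show ?thesis using abgrp_cancel[OF G' pi pi] by simp
qed
lemma push_zm: assumes "A \<in> Ob K" "A' \<in> Ob K" "C \<in> Ob K" "d \<in> Ex K C A"
  shows "push K (z A A') C d = ezero K C A'"
proof -
  have zh: "z A A' \<in> H A A'" using zhom assms by blast
  have G': "abgrp (Ex K C A') (eadd K C A') (ezero K C A')" using eg[OF assms(3) assms(2)] .
  have pi: "push K (z A A') C d \<in> Ex K C A'" using push_in zh assms by blast
  have "push K (z A A') C d = push K (z A A' \<oplus> z A A') C d" using add_zl zh by simp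
  also have "\<dots> = eadd K C A' (push K (z A A') C d) (push K (z A A') C d)"
    using push_madd zh assms by blast
  finally show ?thesis using abgrp_cancel[OF G' pi pi] by simp
qed

lemma r1: "\<forall>C\<in>Ob K. \<forall>A\<in>Ob K. \<forall>d\<in>Ex K C A. \<exists>x y. rlz K C A d x y"
  using rea unfolding realization_def by (elim conjE) assumption
lemma r2: "\<forall>C A d x y. rlz K C A d x y \<longrightarrow> C \<in> Ob K \<and> A \<in> Ob K \<and> d \<in> Ex K C A \<and>
        x \<in> Mor K \<and> y \<in> Mor K \<and> dm K x = A \<and> cd K x = dm K y \<and> cd K y = C"
  using rea unfolding realization_def by (elim conjE) assumption
lemma r3: "\<forall>C A d x y x' y'. rlz K C A d x y \<and> rlz K C A d x' y' \<longrightarrow> seq_eq K x y x' y'"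
  using rea unfolding realization_def by (elim conjE) assumption
lemma r4: "\<forall>C A d x y x' y'. rlz K C A d x y \<and> seq_eq K x y x' y' \<longrightarrow> rlz K C A d x' y'"
  using rea unfolding realization_def by (elim conjE) assumption
lemma r5: "\<forall>C A d x y C' A' d' x' y' a c.
        rlz K C A d x y \<and> rlz K C' A' d' x' y' \<and> a \<in> Hom K A A' \<and> c \<in> Hom K C C' \<and>
        push K a C d = pull K c A' d' \<longrightarrow>
        (\<exists>b\<in>Hom K (cd K x) (cd K x'). cmp K b x = cmp K x' a \<and> cmp K c y = cmp K y' b)"
  using rea unfolding realization_def by (elim conjE) assumption

lemma rex: "C \<in> Ob K \<Longrightarrow> A \<in> Ob K \<Longrightarrow> d \<in> Ex K C A \<Longrightarrow> \<exists>x y. rlz K C A d x y"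
  using r1 by blast
lemma rD: assumes "rlz K C A d x y"
  shows "C \<in> Ob K" "A \<in> Ob K" "d \<in> Ex K C A" "x \<in> H A (cd K x)" "y \<in> H (cd K x) C" "cd K x \<in> Ob K"
proof -
  have h: "C \<in> Ob K \<and> A \<in> Ob K \<and> d \<in> Ex K C A \<and>
        x \<in> Mor K \<and> y \<in> Mor K \<and> dm K x = A \<and> cd K x = dm K y \<and> cd K y = C"
    using r2 assms by blast
  then show "C \<in> Ob K" "A \<in> Ob K" "d \<in> Ex K C A" "x \<in> H A (cd K x)" "y \<in> H (cd K x) C"
    unfolding Hom_def by auto
  show "cd K x \<in> Ob K" using h Mor_ob by blast
qed
lemma r_uniq: "rlz K C A d x y \<Longrightarrow> rlz K C A d x' y' \<Longrightarrow> seq_eq K x y x' y'"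
  using r3 by blast
lemma r_seq: "rlz K C A d x y \<Longrightarrow> seq_eq K x y x' y' \<Longrightarrow> rlz K C A d x' y'"
  using r4 by blast
lemma r_mor: "rlz K C A d x y \<Longrightarrow> rlz K C' A' d' x' y' \<Longrightarrow> a \<in> H A A' \<Longrightarrow> c \<in> H C C' \<Longrightarrow>
        push K a C d = pull K c A' d' \<Longrightarrow>
        \<exists>b\<in>H (cd K x) (cd K x'). b \<cdot> x = x' \<cdot> a \<and> c \<cdot> y = y' \<cdot> b"
  using r5 by blast

lemma ar1: "\<forall>A C S i1 i2 p1 p2. A \<in> Ob K \<and> C \<in> Ob K \<and> biprod K A C S i1 i2 p1 p2 \<longrightarrow>
        rlz K C A (ezero K C A) i1 p2"
  using area unfolding additive_realization_def by (elim conjE) assumption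
lemma split_rlz: "A \<in> Ob K \<Longrightarrow> C \<in> Ob K \<Longrightarrow> biprod K A C S i1 i2 p1 p2 \<Longrightarrow> rlz K C A (ezero K C A) i1 p2"
  using ar1 by blast

lemma bp_ex: "\<forall>A\<in>Ob K. \<forall>B\<in>Ob K. \<exists>S i1 i2 p1 p2. biprod K A B S i1 i2 p1 p2"
  using addc unfolding additive_cat_def by (elim conjE) assumption
lemma bpD: assumes "biprod K A B S i1 i2 p1 p2"
  shows "S \<in> Ob K" "i1 \<in> H A S" "i2 \<in> H B S" "p1 \<in> H S A" "p2 \<in> H S B"
     "p1 \<cdot> i1 = idm K A" "p2 \<cdot> i2 = idm K B" "p2 \<cdot> i1 = z A B" "p1 \<cdot> i2 = z B A"
     "i1 \<cdot> p1 \<oplus> i2 \<cdot> p2 = idm K S"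
  using assms unfolding biprod_def by blast+

lemma et3r: "rlz K C A d x y \<Longrightarrow> rlz K C' A' d' x' y' \<Longrightarrow> a \<in> H A A' \<Longrightarrow>
     b \<in> H (cd K x) (cd K x') \<Longrightarrow> x' \<cdot> a = b \<cdot> x \<Longrightarrow>
     \<exists>c\<in>H C C'. c \<cdot> y = y' \<cdot> b \<and> push K a C d = pull K c A' d'"
  using et3 unfolding ET3_def by blast
lemma et3opr: "rlz K C A d x y \<Longrightarrow> rlz K C' A' d' x' y' \<Longrightarrow> c \<in> H C C' \<Longrightarrow>
     b \<in> H (cd K x) (cd K x') \<Longrightarrow> c \<cdot> y = y' \<cdot> b \<Longrightarrow>
     \<exists>a\<in>H A A'. x' \<cdot> a = b \<cdot> x \<and> push K a C d = pull K c A' d'"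
  using et3op unfolding ET3op_def by blast

lemma bp_Z0l: assumes "Z \<in> Ob K" shows "biprod K Z0 Z Z (z Z0 Z) (idm K Z) (z Z Z0) (idm K Z)"
proof -
  have i: "idm K Z \<in> H Z Z" using id_hom assms by blast
  have a: "z Z Z0 \<cdot> z Z0 Z = idm K Z0" using thru_Z0 zhom assms Z0_ob idZ0
    by (metis cz_l)
  have b: "idm K Z \<cdot> z Z0 Z = z Z0 Z" using idl zhom assms Z0_ob by blast
  have c: "z Z Z0 \<cdot> idm K Z = z Z Z0" using idr zhom assms Z0_ob by blast
  have d: "z Z0 Z \<cdot> z Z Z0 = z Z Z" using thru_Z0 zhom assms Z0_ob by blast
  have e: "idm K Z \<cdot> idm K Z = idm K Z" using idl i by blast
  have f: "z Z Z \<oplus> idm K Z = idm K Z" using add_zl i by blast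
  show ?thesis unfolding biprod_def using assms i a b c d e f zhom Z0_ob by simp
qed
lemma bp_Z0r: assumes "Z \<in> Ob K" shows "biprod K Z Z0 Z (idm K Z) (z Z0 Z) (idm K Z) (z Z Z0)"
proof -
  have i: "idm K Z \<in> H Z Z" using id_hom assms by blast
  have a: "z Z Z0 \<cdot> z Z0 Z = idm K Z0" using thru_Z0 zhom assms Z0_ob idZ0
    by (metis cz_l)
  have b: "idm K Z \<cdot> z Z0 Z = z Z0 Z" using idl zhom assms Z0_ob by blast
  have c: "z Z Z0 \<cdot> idm K Z = z Z Z0" using idr zhom assms Z0_ob by blast
  have d: "z Z0 Z \<cdot> z Z Z0 = z Z Z" using thru_Z0 zhom assms Z0_ob by blast
  have e: "idm K Z \<cdot> idm K Z = idm K Z" using idl i by blast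
  have f: "idm K Z \<oplus> z Z Z = idm K Z" using add_zr i by blast
  show ?thesis unfolding biprod_def using assms i a b c d e f zhom Z0_ob by simp
qed
lemma tri0l: "Z \<in> Ob K \<Longrightarrow> rlz K Z Z0 (ezero K Z Z0) (z Z0 Z) (idm K Z)"
  using split_rlz[OF Z0_ob _ bp_Z0l] by blast
lemma tri0r: "Z \<in> Ob K \<Longrightarrow> rlz K Z0 Z (ezero K Z0 Z) (idm K Z) (z Z Z0)"
  using split_rlz[OF _ Z0_ob bp_Z0r] by blast

end



context xc begin

lemma cdH: "f \<in> H A B \<Longrightarrow> cd K f = B" using HomD by blast
lemma dmH: "f \<in> H A B \<Longrightarrow> dm K f = A" using HomD by blast

lemma N1: assumes r: "rlz K C A d x y" shows "y \<cdot> x = z A C"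
proof -
  note D = rD[OF r]
  have t: "rlz K C Z0 (ezero K C Z0) (z Z0 C) (idm K C)" using tri0l D(1) .
  have zc: "cd K (z Z0 C) = C" using cdH zhom Z0_ob D(1) by blast
  have i: "idm K C \<in> H C C" using id_hom D(1) .
  have yb: "y \<in> H (cd K x) (cd K (z Z0 C))" using D(5) zc by simp
  obtain a where a: "a \<in> H A Z0" "z Z0 C \<cdot> a = y \<cdot> x"
    using et3opr[OF r t i yb] by blast
  show ?thesis using a thru_Z0 zhom Z0_ob D(1) by metis
qed

lemma N2: assumes r: "rlz K C A d x y" shows "push K x C d = ezero K C (cd K x)"
proof -
  note D = rD[OF r]
  have t: "rlz K Z0 (cd K x) (ezero K Z0 (cd K x)) (idm K (cd K x)) (z (cd K x) Z0)" using tri0r D(6) .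
  have i: "idm K (cd K x) \<in> H (cd K x) (cd K (idm K (cd K x)))" using id_hom D(6) cdH by metis
  have e: "idm K (cd K x) \<cdot> x = idm K (cd K x) \<cdot> x" by simp
  obtain c where c: "c \<in> H C Z0" "push K x C d = pull K c (cd K x) (ezero K Z0 (cd K x))"
    using et3r[OF r t D(4) i e] by blast
  show ?thesis using c pull_ez D(6) by simp
qed

lemma N3: assumes r: "rlz K C A d x y" shows "pull K y A d = ezero K (cd K x) A"
proof -
  note D = rD[OF r]
  let ?B = "cd K x"
  have t: "rlz K ?B Z0 (ezero K ?B Z0) (z Z0 ?B) (idm K ?B)" using tri0l D(6) .
  have i: "idm K ?B \<in> H (cd K (z Z0 ?B)) (cd K x)" using id_hom D(6) cdH zhom Z0_ob by metis
  have e: "y \<cdot> idm K ?B = y \<cdot> idm K ?B" by simp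
  obtain a where a: "a \<in> H Z0 A" "push K a ?B (ezero K ?B Z0) = pull K y A d"
    using et3opr[OF t r D(5) i e] by blast
  show ?thesis using a push_ez D(6) by metis
qed

lemma N4: assumes r: "rlz K C A d x y" and f: "f \<in> H A Zz" and e: "push K f C d = ezero K C Zz"
  shows "\<exists>g\<in>H (cd K x) Zz. g \<cdot> x = f"
proof -
  note D = rD[OF r]
  have Zo: "Zz \<in> Ob K" using f Hom_ob by blast
  obtain S i1 i2 p1 p2 where bp: "biprod K Zz C S i1 i2 p1 p2" using bp_ex Zo D(1) by blast
  note B = bpD[OF bp]
  have t: "rlz K C Zz (ezero K C Zz) i1 p2" using split_rlz[OF Zo D(1) bp] .
  have i: "idm K C \<in> H C C" using id_hom D(1) .
  have e2: "push K f C d = pull K (idm K C) Zz (ezero K C Zz)" using e pull_id D(1) Zo ez_in by simp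
  obtain b where b: "b \<in> H (cd K x) (cd K i1)" "b \<cdot> x = i1 \<cdot> f"
    using r_mor[OF r t f i e2] by blast
  have bS: "b \<in> H (cd K x) S" using b(1) cdH B(2) by metis
  have "(p1 \<cdot> b) \<cdot> x = p1 \<cdot> (b \<cdot> x)" using assoc D(4) bS B(4) by metis
  also have "\<dots> = (p1 \<cdot> i1) \<cdot> f" using b(2) assoc f B by metis
  also have "\<dots> = f" using B(6) idl f by simp
  finally show ?thesis using cmp_hom bS B(4) by blast
qed

lemma N5: assumes r: "rlz K C A d x y" and f: "f \<in> H W C" and e: "pull K f A d = ezero K W A"
  shows "\<exists>g\<in>H W (cd K x). y \<cdot> g = f"
proof -
  note D = rD[OF r]
  have Wo: "W \<in> Ob K" using f Hom_ob by blast
  obtain S i1 i2 p1 p2 where bp: "biprod K A W S i1 i2 p1 p2" using bp_ex Wo D(2) by blast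
  note B = bpD[OF bp]
  have t: "rlz K W A (ezero K W A) i1 p2" using split_rlz[OF D(2) Wo bp] .
  have i: "idm K A \<in> H A A" using id_hom D(2) .
  have e2: "push K (idm K A) W (ezero K W A) = pull K f A d" using e push_id D(2) Wo ez_in by simp
  obtain b where b: "b \<in> H (cd K i1) (cd K x)" "f \<cdot> p2 = y \<cdot> b"
    using r_mor[OF t r i f e2] by blast
  have bS: "b \<in> H S (cd K x)" using b(1) cdH B(2) by metis
  have "y \<cdot> (b \<cdot> i2) = (y \<cdot> b) \<cdot> i2" using assoc D(5) bS B(3) by metis
  also have "\<dots> = f \<cdot> (p2 \<cdot> i2)" using b(2) assoc f B by metis
  also have "\<dots> = f" using B(7) idr f by simp
  finally show ?thesis using cmp_hom bS B(3) by blast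
qed

lemma N6: assumes r: "rlz K C A d x y" and Zo: "Zz \<in> Ob K" and ei: "e \<in> Ex K C Zz"
  and e: "pull K y Zz e = ezero K (cd K x) Zz"
  shows "\<exists>f\<in>H A Zz. push K f C d = e"
proof -
  note D = rD[OF r]
  obtain m m' where t: "rlz K C Zz e m m'" using rex D(1) Zo ei by blast
  obtain g where g: "g \<in> H (cd K x) (cd K m)" "m' \<cdot> g = y" using N5[OF t D(5) e] by blast
  have i: "idm K C \<in> H C C" using id_hom D(1) .
  have e2: "idm K C \<cdot> y = m' \<cdot> g" using g idl D(5) by simp
  obtain a where a: "a \<in> H A Zz" "push K a C d = pull K (idm K C) Zz e"
    using et3opr[OF r t i g(1) e2] by blast
  thus ?thesis using pull_id D(1) Zo ei by metis
qed

lemma N7: assumes r: "rlz K C A d x y" and Wo: "W \<in> Ob K" and ei: "e \<in> Ex K W A"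
  and e: "push K x W e = ezero K W (cd K x)"
  shows "\<exists>f\<in>H W C. pull K f A d = e"
proof -
  note D = rD[OF r]
  obtain m m' where t: "rlz K W A e m m'" using rex D(2) Wo ei by blast
  obtain g where g: "g \<in> H (cd K m) (cd K x)" "g \<cdot> m = x" using N4[OF t D(4) e] by blast
  have i: "idm K A \<in> H A A" using id_hom D(2) .
  have e2: "x \<cdot> idm K A = g \<cdot> m" using g idr D(4) by simp
  obtain c where cc: "c \<in> H W C" "push K (idm K A) W e = pull K c A d"
    using et3r[OF t r i g(1) e2] by blast
  thus ?thesis using push_id D(2) Wo ei by metis
qed

lemma N8: assumes r: "rlz K C A d x y" and f: "f \<in> H (cd K x) Zz" and e: "f \<cdot> x = z A Zz"
  shows "\<exists>f'\<in>H C Zz. f' \<cdot> y = f"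
proof -
  note D = rD[OF r]
  have Zo: "Zz \<in> Ob K" using f Hom_ob by blast
  have t: "rlz K Zz Z0 (ezero K Zz Z0) (z Z0 Zz) (idm K Zz)" using tri0l Zo .
  have a: "z A Z0 \<in> H A Z0" using zhom D(2) Z0_ob by blast
  have fb: "f \<in> H (cd K x) (cd K (z Z0 Zz))" using f cdH zhom Z0_ob Zo by metis
  have e2: "z Z0 Zz \<cdot> z A Z0 = f \<cdot> x" using e thru_Z0 a zhom Z0_ob Zo by metis
  obtain c where c: "c \<in> H C Zz" "c \<cdot> y = idm K Zz \<cdot> f" using et3r[OF r t a fb e2] by blast
  thus ?thesis using idl f by metis
qed

lemma N9: assumes r: "rlz K C A d x y" and u: "u \<in> H W (cd K x)" and e: "y \<cdot> u = z W C"
  shows "\<exists>v\<in>H W A. x \<cdot> v = u"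
proof -
  note D = rD[OF r]
  have Wo: "W \<in> Ob K" using u Hom_ob by blast
  have t: "rlz K Z0 W (ezero K Z0 W) (idm K W) (z W Z0)" using tri0r Wo .
  have cz: "z Z0 C \<in> H Z0 C" using zhom D(1) Z0_ob by blast
  have ub: "u \<in> H (cd K (idm K W)) (cd K x)" using u cdH id_hom Wo by metis
  have e2: "z Z0 C \<cdot> z W Z0 = y \<cdot> u" using e thru_Z0 cz zhom Z0_ob Wo by metis
  obtain a where a: "a \<in> H W A" "x \<cdot> a = u \<cdot> idm K W" using et3opr[OF t r cz ub e2] by blast
  thus ?thesis using idr u by metis
qed

text \<open>Dimension shifting lemmas\<close>

lemma GL: assumes r: "rlz K C Kk d x y" and r': "rlz K S Y d' x' y'"
  and v1: "Ex K (cd K x) S = {ezero K (cd K x) S}" and v2: "Ex K C (cd K x') = {ezero K C (cd K x')}"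
  and v3: "Ex K Kk Y = {ezero K Kk Y}"
  shows "Ex K C S = {ezero K C S}"
proof -
  note D = rD[OF r] and D' = rD[OF r']
  have "e = ezero K C S" if ei: "e \<in> Ex K C S" for e
  proof -
    have "pull K y S e \<in> Ex K (cd K x) S" using pull_in D(5) D'(1) ei by blast
    hence "pull K y S e = ezero K (cd K x) S" using v1 by blast
    then obtain f where f: "f \<in> H Kk S" "push K f C d = e" using N6[OF r D'(1) ei] by blast
    have "pull K f Y d' \<in> Ex K Kk Y" using pull_in f(1) D'(2) D'(3) by blast
    hence "pull K f Y d' = ezero K Kk Y" using v3 by blast
    then obtain h where h: "h \<in> H Kk (cd K x')" "y' \<cdot> h = f" using N5[OF r' f(1)] by blast
    have "push K h C d \<in> Ex K C (cd K x')" using push_in h(1) D(1) D(3) by blast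
    hence "push K h C d = ezero K C (cd K x')" using v2 by blast
    then obtain h' where h': "h' \<in> H (cd K x) (cd K x')" "h' \<cdot> x = h" using N4[OF r h(1)] by blast
    have "f = (y' \<cdot> h') \<cdot> x" using h h' assoc D(4) D'(5) by metis
    hence "push K f C d = push K (y' \<cdot> h') C (push K x C d)"
      using push_cmp D(4) cmp_hom h'(1) D'(5) D(1) D(3) by metis
    also have "\<dots> = push K (y' \<cdot> h') C (ezero K C (cd K x))" using N2[OF r] by simp
    also have "\<dots> = ezero K C S" using push_ez cmp_hom h'(1) D'(5) D(1) by blast
    finally show ?thesis using f by simp
  qed
  moreover have "ezero K C S \<in> Ex K C S" using ez_in D(1) D'(1) .
  ultimately show ?thesis by blast
qed

lemma GL': assumes r: "rlz K C Kk d x y" and r': "rlz K S Y d' x' y'"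
  and v1: "Ex K Kk (cd K x') = {ezero K Kk (cd K x')}" and v2: "Ex K (cd K x) Y = {ezero K (cd K x) Y}"
  and v3: "Ex K C S = {ezero K C S}"
  shows "Ex K Kk Y = {ezero K Kk Y}"
proof -
  note D = rD[OF r] and D' = rD[OF r']
  have "e = ezero K Kk Y" if ei: "e \<in> Ex K Kk Y" for e
  proof -
    have "push K x' Kk e \<in> Ex K Kk (cd K x')" using push_in D'(4) D(2) ei by blast
    hence "push K x' Kk e = ezero K Kk (cd K x')" using v1 by blast
    then obtain f where f: "f \<in> H Kk S" "pull K f Y d' = e" using N7[OF r' D(2) ei] by blast
    have "push K f C d \<in> Ex K C S" using push_in f(1) D(1) D(3) by blast
    hence "push K f C d = ezero K C S" using v3 by blast
    then obtain g where g: "g \<in> H (cd K x) S" "g \<cdot> x = f" using N4[OF r f(1)] by blast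
    have "pull K g Y d' \<in> Ex K (cd K x) Y" using pull_in g(1) D'(2) D'(3) by blast
    hence "pull K g Y d' = ezero K (cd K x) Y" using v2 by blast
    then obtain g' where g': "g' \<in> H (cd K x) (cd K x')" "y' \<cdot> g' = g" using N5[OF r' g(1)] by blast
    have "f = y' \<cdot> (g' \<cdot> x)" using g g' assoc D(4) D'(5) by metis
    hence "pull K f Y d' = pull K (g' \<cdot> x) Y (pull K y' Y d')"
      using pull_cmp D(4) cmp_hom g'(1) D'(5) D'(2) D'(3) by metis
    also have "\<dots> = pull K (g' \<cdot> x) Y (ezero K (cd K x') Y)" using N3[OF r'] by simp
    also have "\<dots> = ezero K Kk Y" using pull_ez cmp_hom g'(1) D(4) D'(2) by blast
    finally show ?thesis using f by simp
  qed
  moreover have "ezero K Kk Y \<in> Ex K Kk Y" using ez_in D(2) D'(2) .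
  ultimately show ?thesis by blast
qed

end



definition inj_chain :: "('o,'m,'e,'z) ecat_scheme \<Rightarrow> nat \<Rightarrow> (nat \<Rightarrow> 'o) \<Rightarrow> bool" where
  "inj_chain K n Ls \<longleftrightarrow> (\<forall>k<n. \<exists>d x y. rlz K (Ls (Suc k)) (Ls k) d x y \<and> injective K (cd K x))"

definition ev :: "('o,'m,'e,'z) ecat_scheme \<Rightarrow> 'o \<Rightarrow> 'o \<Rightarrow> bool" where
  "ev K A B \<longleftrightarrow> Ex K A B = {ezero K A B}"

primrec pc :: "('o,'m,'e,'z) ecat_scheme \<Rightarrow> 'o \<Rightarrow> nat \<Rightarrow> 'o" where
  "pc K X 0 = X"
| "pc K X (Suc k) = (SOME A. \<exists>d x y. rlz K (pc K X k) A d x y \<and> projective K (cd K x))"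

primrec ic :: "('o,'m,'e,'z) ecat_scheme \<Rightarrow> 'o \<Rightarrow> nat \<Rightarrow> 'o" where
  "ic K X 0 = X"
| "ic K X (Suc k) = (SOME C. \<exists>d x y. rlz K C (ic K X k) d x y \<and> injective K (cd K x))"

context xc begin

lemma proj_ev: "projective K P \<Longrightarrow> X \<in> Ob K \<Longrightarrow> ev K P X"
  unfolding projective_def ev_def by blast
lemma inj_ev: "injective K I \<Longrightarrow> X \<in> Ob K \<Longrightarrow> ev K X I"
  unfolding injective_def ev_def by blast

lemma EQ: "syz_chain K k Ks \<Longrightarrow> inj_chain K k Ls \<Longrightarrow> Ks 0 \<in> Ob K \<Longrightarrow> Ls 0 \<in> Ob K \<Longrightarrow>
   ev K (Ks k) (Ls 0) \<longleftrightarrow> ev K (Ks 0) (Ls k)"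
proof (induction k arbitrary: Ks)
  case 0
  then show ?case by simp
next
  case (Suc k)
  obtain d x y where t: "rlz K (Ks 0) (Ks (Suc 0)) d x y" "projective K (cd K x)"
    using Suc.prems(1) unfolding syz_chain_def by blast
  obtain d' x' y' where t': "rlz K (Ls (Suc k)) (Ls k) d' x' y'" "injective K (cd K x')"
    using Suc.prems(2) unfolding inj_chain_def by blast
  note D = rD[OF t(1)] and D' = rD[OF t'(1)]
  have sc: "syz_chain K k (\<lambda>j. Ks (Suc j))" using Suc.prems(1) unfolding syz_chain_def by auto
  have ic: "inj_chain K k Ls" using Suc.prems(2) unfolding inj_chain_def by auto
  have IH: "ev K (Ks (Suc k)) (Ls 0) \<longleftrightarrow> ev K (Ks 1) (Ls k)"
    using Suc.IH[OF sc ic D(2) Suc.prems(4)] by simp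
  have "ev K (Ks 1) (Ls k) \<longleftrightarrow> ev K (Ks 0) (Ls (Suc k))"
  proof
    assume a: "ev K (Ks 1) (Ls k)"
    show "ev K (Ks 0) (Ls (Suc k))" unfolding ev_def
      apply (rule GL[OF t(1) t'(1)])
      using proj_ev[OF t(2) D'(1)] inj_ev[OF t'(2) D(1)] a unfolding ev_def by simp_all
  next
    assume a: "ev K (Ks 0) (Ls (Suc k))"
    show "ev K (Ks 1) (Ls k)" unfolding ev_def One_nat_def
      apply (rule GL'[OF t(1) t'(1)])
      using proj_ev[OF t(2) D'(2)] inj_ev[OF t'(2) D(2)] a unfolding ev_def by simp_all
  qed
  with IH show ?case by simp
qed

end

locale xc2 = xc +
  assumes ep: "enough_projectives K" and ei: "enough_injectives K"
begin

lemma pc_step: assumes "X \<in> Ob K"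
  shows "pc K X k \<in> Ob K \<and> (\<exists>d x y. rlz K (pc K X k) (pc K X (Suc k)) d x y \<and> projective K (cd K x))"
proof (induction k)
  case 0
  have "\<exists>A d x y. rlz K X A d x y \<and> projective K (cd K x)" using ep assms unfolding enough_projectives_def by blast
  then show ?case using assms by simp (rule someI_ex)
next
  case (Suc k)
  then have o: "pc K X (Suc k) \<in> Ob K" using rD by blast
  have "\<exists>A d x y. rlz K (pc K X (Suc k)) A d x y \<and> projective K (cd K x)" using ep o unfolding enough_projectives_def by blast
  hence "\<exists>d x y. rlz K (pc K X (Suc k)) (pc K X (Suc (Suc k))) d x y \<and> projective K (cd K x)"
    by simp (rule someI_ex)
  with o show ?case by blast
qed

lemma ic_step: assumes "X \<in> Ob K"
  shows "ic K X k \<in> Ob K \<and> (\<exists>d x y. rlz K (ic K X (Suc k)) (ic K X k) d x y \<and> injective K (cd K x))"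
proof (induction k)
  case 0
  have "\<exists>C d x y. rlz K C X d x y \<and> injective K (cd K x)" using ei assms unfolding enough_injectives_def by blast
  then show ?case using assms by simp (rule someI_ex)
next
  case (Suc k)
  then have o: "ic K X (Suc k) \<in> Ob K" using rD by blast
  have "\<exists>C d x y. rlz K C (ic K X (Suc k)) d x y \<and> injective K (cd K x)" using ei o unfolding enough_injectives_def by blast
  hence "\<exists>d x y. rlz K (ic K X (Suc (Suc k))) (ic K X (Suc k)) d x y \<and> injective K (cd K x)"
    by simp (rule someI_ex)
  with o show ?case by blast
qed

lemma pc_chain: "X \<in> Ob K \<Longrightarrow> syz_chain K n (pc K X)"
  unfolding syz_chain_def using pc_step by blast
lemma ic_chain: "X \<in> Ob K \<Longrightarrow> inj_chain K n (ic K X)"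
  unfolding inj_chain_def using ic_step by blast
lemma ic_ob: "X \<in> Ob K \<Longrightarrow> ic K X k \<in> Ob K" using ic_step by blast
lemma ic_tri: "X \<in> Ob K \<Longrightarrow> \<exists>d x y. rlz K (ic K X (Suc k)) (ic K X k) d x y \<and> injective K (cd K x)"
  using ic_step by blast

lemma ev_iff: assumes "X \<in> Ob K" "V \<in> Ob K"
  shows "ext_vanish K i X V \<longleftrightarrow> ev K X (ic K V (i - 1))"
proof
  assume "ext_vanish K i X V"
  then obtain Ks where Ks: "Ks 0 = X" "syz_chain K (i - 1) Ks" "ev K (Ks (i - 1)) V"
    unfolding ext_vanish_def ev_def by blast
  show "ev K X (ic K V (i - 1))"
    using EQ[OF Ks(2) ic_chain[OF assms(2)]] Ks assms by simp
next
  assume a: "ev K X (ic K V (i - 1))"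
  have "ev K (pc K X (i - 1)) V"
    using EQ[OF pc_chain[OF assms(1)] ic_chain[OF assms(2)]] a assms by simp
  moreover have "pc K X 0 = X" by simp
  ultimately show "ext_vanish K i X V" unfolding ext_vanish_def ev_def using pc_chain[OF assms(1), of "i - 1"] by blast
qed

end



named_theorems ms

context xc begin

lemma cmpM[ms]: "f \<in> Mor K \<Longrightarrow> g \<in> Mor K \<Longrightarrow> cd K f = dm K g \<Longrightarrow> g \<cdot> f \<in> Mor K"
  using cmp_hom Mor_Hom HomD by metis
lemma dm_cmp[ms]: "f \<in> Mor K \<Longrightarrow> g \<in> Mor K \<Longrightarrow> cd K f = dm K g \<Longrightarrow> dm K (g \<cdot> f) = dm K f"
  using cmp_hom Mor_Hom HomD by metis
lemma cd_cmp[ms]: "f \<in> Mor K \<Longrightarrow> g \<in> Mor K \<Longrightarrow> cd K f = dm K g \<Longrightarrow> cd K (g \<cdot> f) = cd K g"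
  using cmp_hom Mor_Hom HomD by metis
lemma addM[ms]: "f \<in> Mor K \<Longrightarrow> g \<in> Mor K \<Longrightarrow> dm K f = dm K g \<Longrightarrow> cd K f = cd K g \<Longrightarrow> f \<oplus> g \<in> Mor K"
  using addhom Mor_Hom HomD by metis
lemma dm_add[ms]: "f \<in> Mor K \<Longrightarrow> g \<in> Mor K \<Longrightarrow> dm K f = dm K g \<Longrightarrow> cd K f = cd K g \<Longrightarrow> dm K (f \<oplus> g) = dm K f"
  using addhom Mor_Hom HomD by metis
lemma cd_add[ms]: "f \<in> Mor K \<Longrightarrow> g \<in> Mor K \<Longrightarrow> dm K f = dm K g \<Longrightarrow> cd K f = cd K g \<Longrightarrow> cd K (f \<oplus> g) = cd K f"
  using addhom Mor_Hom HomD by metis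
lemma zM[ms]: "A \<in> Ob K \<Longrightarrow> B \<in> Ob K \<Longrightarrow> z A B \<in> Mor K"
  using zhom HomD by metis
lemma dm_z[ms]: "A \<in> Ob K \<Longrightarrow> B \<in> Ob K \<Longrightarrow> dm K (z A B) = A"
  using zhom HomD by metis
lemma cd_z[ms]: "A \<in> Ob K \<Longrightarrow> B \<in> Ob K \<Longrightarrow> cd K (z A B) = B"
  using zhom HomD by metis
lemma idM[ms]: "A \<in> Ob K \<Longrightarrow> idm K A \<in> Mor K"
  using id_hom HomD by metis
lemma dm_id[ms]: "A \<in> Ob K \<Longrightarrow> dm K (idm K A) = A"
  using id_hom HomD by metis
lemma cd_id[ms]: "A \<in> Ob K \<Longrightarrow> cd K (idm K A) = A"
  using id_hom HomD by metis
lemma dm_ob[ms]: "f \<in> Mor K \<Longrightarrow> dm K f \<in> Ob K" using Mor_ob by blast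
lemma cd_ob[ms]: "f \<in> Mor K \<Longrightarrow> cd K f \<in> Ob K" using Mor_ob by blast
lemma assoc_ms[ms]: "f \<in> Mor K \<Longrightarrow> g \<in> Mor K \<Longrightarrow> h \<in> Mor K \<Longrightarrow> cd K f = dm K g \<Longrightarrow> cd K g = dm K h \<Longrightarrow>
   (h \<cdot> g) \<cdot> f = h \<cdot> (g \<cdot> f)"
  using assoc Mor_Hom HomD by metis
lemma distl_ms[ms]: "f \<in> Mor K \<Longrightarrow> f' \<in> Mor K \<Longrightarrow> g \<in> Mor K \<Longrightarrow> dm K f = dm K f' \<Longrightarrow> cd K f = cd K f' \<Longrightarrow>
   cd K f = dm K g \<Longrightarrow> g \<cdot> (f \<oplus> f') = g \<cdot> f \<oplus> g \<cdot> f'"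
  using distl Mor_Hom HomD by metis
lemma distr_ms[ms]: "f \<in> Mor K \<Longrightarrow> g \<in> Mor K \<Longrightarrow> g' \<in> Mor K \<Longrightarrow> dm K g = dm K g' \<Longrightarrow> cd K g = cd K g' \<Longrightarrow>
   cd K f = dm K g \<Longrightarrow> (g \<oplus> g') \<cdot> f = g \<cdot> f \<oplus> g' \<cdot> f"
  using distr Mor_Hom HomD by metis
lemma idl_ms[ms]: "f \<in> Mor K \<Longrightarrow> cd K f = B \<Longrightarrow> idm K B \<cdot> f = f"
  using idl Mor_Hom by metis
lemma idr_ms[ms]: "f \<in> Mor K \<Longrightarrow> dm K f = A \<Longrightarrow> f \<cdot> idm K A = f"
  using idr Mor_Hom by metis
lemma zl_ms[ms]: "f \<in> Mor K \<Longrightarrow> cd K f = B \<Longrightarrow> C \<in> Ob K \<Longrightarrow> z B C \<cdot> f = z (dm K f) C"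
  using cz_r Mor_Hom by metis
lemma zr_ms[ms]: "f \<in> Mor K \<Longrightarrow> dm K f = B \<Longrightarrow> C \<in> Ob K \<Longrightarrow> f \<cdot> z C B = z C (cd K f)"
  using cz_l Mor_Hom by metis
lemma addzl_ms[ms]: "f \<in> Mor K \<Longrightarrow> dm K f = A \<Longrightarrow> cd K f = B \<Longrightarrow> z A B \<oplus> f = f"
  using add_zl Mor_Hom by metis
lemma addzr_ms[ms]: "f \<in> Mor K \<Longrightarrow> dm K f = A \<Longrightarrow> cd K f = B \<Longrightarrow> f \<oplus> z A B = f"
  using add_zr Mor_Hom by metis

lemma assoc_rel: "g \<cdot> f = h \<Longrightarrow> f \<in> Mor K \<Longrightarrow> g \<in> Mor K \<Longrightarrow> k \<in> Mor K \<Longrightarrow> cd K k = dm K f \<Longrightarrow> cd K f = dm K g \<Longrightarrow>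
   g \<cdot> (f \<cdot> k) = h \<cdot> k"
  using assoc_ms by metis

lemma HomE: "f \<in> H A B \<Longrightarrow> f \<in> Mor K \<and> dm K f = A \<and> cd K f = B" using HomD by blast

lemma add_assoc_ms: "f \<in> Mor K \<Longrightarrow> g \<in> Mor K \<Longrightarrow> h \<in> Mor K \<Longrightarrow> dm K f = dm K g \<Longrightarrow> cd K f = cd K g \<Longrightarrow>
   dm K h = dm K g \<Longrightarrow> cd K h = cd K g \<Longrightarrow> (f \<oplus> g) \<oplus> h = f \<oplus> (g \<oplus> h)"
  using add_assoc Mor_Hom HomD by metis
lemma add_comm_ms: "f \<in> Mor K \<Longrightarrow> g \<in> Mor K \<Longrightarrow> dm K f = dm K g \<Longrightarrow> cd K f = cd K g \<Longrightarrow> f \<oplus> g = g \<oplus> f"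
  using add_comm Mor_Hom HomD by metis

lemma AUT: assumes h: "h \<in> H N N" and hh: "h \<cdot> h = z N N"
  shows "(idm K N \<oplus> h) \<cdot> (idm K N \<oplus> mneg N N h) = idm K N"
    "(idm K N \<oplus> mneg N N h) \<cdot> (idm K N \<oplus> h) = idm K N"
proof -
  define n where "n = mneg N N h"
  have n: "n \<in> H N N" "h \<oplus> n = z N N" using mneg[OF h] n_def by auto
  have No: "N \<in> Ob K" using h Hom_ob by blast
  note T = HomE[OF h] HomE[OF n(1)] No
  have hn: "h \<cdot> n = z N N"
  proof -
    have "h \<cdot> (h \<oplus> n) = h \<cdot> z N N" using n by simp
    hence "h \<cdot> h \<oplus> h \<cdot> n = z N N" using T by (simp add: ms)
    thus ?thesis using T hh by (simp add: ms)
  qed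
  have nh: "n \<cdot> h = z N N"
  proof -
    have "(h \<oplus> n) \<cdot> h = z N N \<cdot> h" using n by simp
    hence "h \<cdot> h \<oplus> n \<cdot> h = z N N" using T by (simp add: ms)
    thus ?thesis using T hh by (simp add: ms)
  qed
  have nh': "n \<oplus> h = z N N" using n add_comm_ms T by metis
  have "(idm K N \<oplus> h) \<cdot> (idm K N \<oplus> n) = (idm K N \<oplus> h) \<oplus> n" using T hn by (simp add: ms)
  also have "\<dots> = idm K N \<oplus> (h \<oplus> n)" using T by (simp add: add_assoc_ms ms)
  also have "\<dots> = idm K N" using T n by (simp add: ms)
  finally show "(idm K N \<oplus> h) \<cdot> (idm K N \<oplus> mneg N N h) = idm K N" using n_def by simp
  have "(idm K N \<oplus> n) \<cdot> (idm K N \<oplus> h) = (idm K N \<oplus> n) \<oplus> h" using T nh by (simp add: ms)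
  also have "\<dots> = idm K N \<oplus> (n \<oplus> h)" using T by (simp add: add_assoc_ms ms)
  also have "\<dots> = idm K N" using T nh' by (simp add: ms)
  finally show "(idm K N \<oplus> mneg N N h) \<cdot> (idm K N \<oplus> h) = idm K N" using n_def by simp
qed

lemma isoI: "f \<in> H A B \<Longrightarrow> g \<in> H B A \<Longrightarrow> g \<cdot> f = idm K A \<Longrightarrow> f \<cdot> g = idm K B \<Longrightarrow> iso K f"
  unfolding iso_def using HomD by metis

lemma TR: assumes r: "rlz K C A d x y" and t: "t \<in> H (cd K x) (cd K x)" and t': "t' \<in> H (cd K x) (cd K x)"
  and e1: "t' \<cdot> t = idm K (cd K x)" and e2: "t \<cdot> t' = idm K (cd K x)"
  shows "rlz K C A d (t \<cdot> x) (y \<cdot> t')"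
proof -
  note D = rD[OF r]
  note T = HomE[OF t] HomE[OF t'] HomE[OF D(4)] HomE[OF D(5)]
  have "seq_eq K x y (t \<cdot> x) (y \<cdot> t')"
    unfolding seq_eq_def
  proof (intro conjI)
    show "\<exists>b\<in>H (cd K x) (cd K (t \<cdot> x)). iso K b \<and> b \<cdot> x = t \<cdot> x \<and> y \<cdot> t' \<cdot> b = y"
    proof (rule bexI[of _ t], intro conjI)
      show "iso K t" using isoI[OF t t' e1 e2] .
      show "y \<cdot> t' \<cdot> t = y" using T e1 by (simp add: ms)
    qed (use T t in \<open>simp_all add: ms\<close>)
  qed (use T in \<open>simp_all add: ms\<close>)
  thus ?thesis using r_seq[OF r] by blast
qed

lemma SQZ: "u \<in> H Q N \<Longrightarrow> v \<in> H N Q \<Longrightarrow> v \<cdot> u = z Q Q \<Longrightarrow> (u \<cdot> v) \<cdot> (u \<cdot> v) = z N N"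
proof -
  assume u: "u \<in> H Q N" and v: "v \<in> H N Q" and e: "v \<cdot> u = z Q Q"
  note T = HomE[OF u] HomE[OF v]
  show ?thesis using T assoc_rel[OF e] Hom_ob[OF u] by (simp add: ms)
qed

lemma SPL: assumes r: "rlz K C A (ezero K C A) x y"
  shows "\<exists>S i1 i2 p1 p2 b. biprod K A C S i1 i2 p1 p2 \<and> b \<in> H (cd K x) S \<and> iso K b"
proof -
  note D = rD[OF r]
  obtain S i1 i2 p1 p2 where bp: "biprod K A C S i1 i2 p1 p2" using bp_ex D by blast
  have t: "rlz K C A (ezero K C A) i1 p2" using split_rlz[OF D(2) D(1) bp] .
  have "seq_eq K x y i1 p2" using r_uniq[OF r t] .
  then obtain b where "b \<in> H (cd K x) (cd K i1)" "iso K b" unfolding seq_eq_def by blast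
  moreover have "cd K i1 = S" using bpD(2)[OF bp] HomD by blast
  ultimately show ?thesis using bp by metis
qed

lemma bp_swap: "biprod K A B S i1 i2 p1 p2 \<Longrightarrow> biprod K B A S i2 i1 p2 p1"
proof -
  assume bp: "biprod K A B S i1 i2 p1 p2"
  note B = bpD[OF bp]
  have "i2 \<cdot> p2 \<oplus> i1 \<cdot> p1 = idm K S" using B(10) add_comm cmp_hom B by metis
  thus ?thesis using B unfolding biprod_def by blast
qed

lemma NIL: assumes r: "rlz K E1 A d1 f q1" and u: "u \<in> H E1 E1" and uq: "u \<cdot> q1 = q1"
  and ud: "pull K u A d1 = d1"
  shows "\<exists>v\<in>H E1 E1. u \<cdot> v = idm K E1 \<and> v \<cdot> u = idm K E1"
proof -
  note D = rD[OF r]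
  let ?M = "cd K f"
  define I where "I = idm K E1"
  define nI where "nI = mneg E1 E1 I"
  have I: "I \<in> H E1 E1" using id_hom D(1) I_def by simp
  have nI: "nI \<in> H E1 E1" "I \<oplus> nI = z E1 E1" using mneg[OF I] nI_def by auto
  define t where "t = u \<oplus> nI"
  have t: "t \<in> H E1 E1" using addhom u nI t_def by blast
  note T = HomE[OF u] HomE[OF nI(1)] HomE[OF I] HomE[OF t] HomE[OF D(4)] HomE[OF D(5)] D(1) D(2) D(6)
  have tq: "t \<cdot> q1 = z ?M E1"
  proof -
    have "z ?M E1 = z E1 E1 \<cdot> q1" using T by (simp add: ms)
    also have "\<dots> = (I \<oplus> nI) \<cdot> q1" using nI(2) by simp
    also have "\<dots> = I \<cdot> q1 \<oplus> nI \<cdot> q1" using T by (simp add: ms)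
    also have "\<dots> = q1 \<oplus> nI \<cdot> q1" using T I_def by (simp add: ms)
    finally have a: "q1 \<oplus> nI \<cdot> q1 = z ?M E1" by simp
    have "t \<cdot> q1 = u \<cdot> q1 \<oplus> nI \<cdot> q1" using T t_def by (simp add: ms)
    thus ?thesis using a uq by simp
  qed
  have tp: "pull K t A d1 = ezero K E1 A"
  proof -
    have "pull K t A d1 = eadd K E1 A (pull K u A d1) (pull K nI A d1)"
      unfolding t_def using pull_madd u nI D by blast
    also have "\<dots> = eadd K E1 A (pull K I A d1) (pull K nI A d1)" using ud pull_id D I_def by simp
    also have "\<dots> = pull K (I \<oplus> nI) A d1" using pull_madd I nI D by metis
    also have "\<dots> = ezero K E1 A" using nI(2) pull_zm D by simp
    finally show ?thesis .
  qed
  obtain sg where sg: "sg \<in> H E1 ?M" "q1 \<cdot> sg = t" using N5[OF r t tp] by blast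
  note T2 = HomE[OF sg(1)]
  have "q1 \<cdot> (sg \<cdot> q1) = z ?M E1" using T T2 tq sg(2) by (metis assoc_ms)
  moreover have sq: "sg \<cdot> q1 \<in> H ?M ?M" using cmp_hom sg(1) D(5) by blast
  ultimately obtain v where v: "v \<in> H ?M A" "f \<cdot> v = sg \<cdot> q1" using N9[OF r] by blast
  note T3 = HomE[OF v(1)]
  have n1: "q1 \<cdot> f = z A E1" using N1[OF r] .
  have tt: "t \<cdot> t = z E1 E1"
  proof -
    have "t \<cdot> t = (q1 \<cdot> sg) \<cdot> (q1 \<cdot> sg)" using sg(2) by simp
    also have "\<dots> = q1 \<cdot> ((sg \<cdot> q1) \<cdot> sg)" using T T2 by (simp add: ms)
    also have "\<dots> = q1 \<cdot> ((f \<cdot> v) \<cdot> sg)" using v(2) by simp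
    also have "\<dots> = z E1 E1" using T T2 T3 assoc_rel[OF n1] by (simp add: ms)
    finally show ?thesis .
  qed
  have ue: "u = I \<oplus> t"
  proof -
    have "I \<oplus> t = (u \<oplus> nI) \<oplus> I" using T t_def add_comm_ms by (metis)
    also have "\<dots> = u \<oplus> (nI \<oplus> I)" using T by (simp add: add_assoc_ms ms)
    also have "nI \<oplus> I = z E1 E1" using nI(2) T add_comm_ms by metis
    finally show ?thesis using T by (simp add: ms)
  qed
  have m: "mneg E1 E1 t \<in> H E1 E1" using mneg[OF t] by blast
  show ?thesis
    apply (rule bexI[of _ "I \<oplus> mneg E1 E1 t"])
    using AUT[OF t tt] ue I_def apply simp
    using addhom I m by blast
qed

lemma CU: assumes r1: "rlz K E1 A d1 f q1" and r2: "rlz K E2 A d2 f q2"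
  shows "\<exists>c\<in>H E1 E2. iso K c"
proof -
  note D1 = rD[OF r1] and D2 = rD[OF r2]
  have ia: "idm K A \<in> H A A" using id_hom D1 by blast
  have ib: "idm K (cd K f) \<in> H (cd K f) (cd K f)" using id_hom D1 by blast
  have fe: "f \<cdot> idm K A = idm K (cd K f) \<cdot> f" using idl idr D1(4) by metis
  obtain c where c: "c \<in> H E1 E2" "c \<cdot> q1 = q2 \<cdot> idm K (cd K f)" "push K (idm K A) E1 d1 = pull K c A d2"
    using et3r[OF r1 r2 ia ib fe] by blast
  obtain c' where c': "c' \<in> H E2 E1" "c' \<cdot> q2 = q1 \<cdot> idm K (cd K f)" "push K (idm K A) E2 d2 = pull K c' A d1"
    using et3r[OF r2 r1 ia ib fe] by blast
  have cq: "c \<cdot> q1 = q2" using c(2) idr D2(5) by metis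
  have cq': "c' \<cdot> q2 = q1" using c'(2) idr D1(5) by metis
  have cd1: "pull K c A d2 = d1" using c(3) push_id D1 by metis
  have cd2: "pull K c' A d1 = d2" using c'(3) push_id D2 by metis
  note T = HomE[OF c(1)] HomE[OF c'(1)] HomE[OF D1(5)] HomE[OF D2(5)]
  have u1: "c' \<cdot> c \<in> H E1 E1" using cmp_hom c c' by blast
  have u1q: "(c' \<cdot> c) \<cdot> q1 = q1" using T cq cq' by (simp add: ms)
  have u1d: "pull K (c' \<cdot> c) A d1 = d1" using pull_cmp[OF c(1) c'(1) D1(2)] D1(3) cd1 cd2 by simp
  obtain v1 where v1: "v1 \<in> H E1 E1" "v1 \<cdot> (c' \<cdot> c) = idm K E1" using NIL[OF r1 u1 u1q u1d] by blast
  have u2: "c \<cdot> c' \<in> H E2 E2" using cmp_hom c c' by blast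
  have u2q: "(c \<cdot> c') \<cdot> q2 = q2" using T cq cq' by (simp add: ms)
  have u2d: "pull K (c \<cdot> c') A d2 = d2" using pull_cmp[OF c'(1) c(1) D1(2)] D2(3) cd1 cd2 by simp
  obtain v2 where v2: "v2 \<in> H E2 E2" "(c \<cdot> c') \<cdot> v2 = idm K E2" using NIL[OF r2 u2 u2q u2d] by blast
  note T2 = HomE[OF v1(1)] HomE[OF v2(1)]
  define L where "L = v1 \<cdot> c'"
  define R where "R = c' \<cdot> v2"
  have Lc: "L \<cdot> c = idm K E1" using v1 T T2 L_def by (simp add: ms)
  have cR: "c \<cdot> R = idm K E2" using v2 T T2 R_def by (simp add: ms)
  have "L = L \<cdot> (c \<cdot> R)" using cR L_def T T2 by (simp add: ms)
  also have "\<dots> = (L \<cdot> c) \<cdot> R" using L_def R_def T T2 by (simp add: ms)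
  finally have LR: "L = R" using Lc R_def T T2 by (simp add: ms)
  have Lh: "L \<in> H E2 E1" using L_def cmp_hom c' v1 by blast
  show ?thesis using isoI[OF c(1) Lh Lc] cR LR c(1) by blast
qed

lemma ar2: "\<forall>A A' B B' C C' SA SB SC iA iA' pA pA' iB iB' pB pB' iC iC' pC pC' d d' x y x' y'.
        biprod K A A' SA iA iA' pA pA' \<and> biprod K B B' SB iB iB' pB pB' \<and>
        biprod K C C' SC iC iC' pC pC' \<and>
        rlz K C A d x y \<and> rlz K C' A' d' x' y' \<and> cd K x = B \<and> cd K x' = B' \<longrightarrow>
        rlz K SC SA
          (eadd K SC SA (push K iA SC (pull K pC A d)) (push K iA' SC (pull K pC' A' d')))
          (madd K (cmp K iB (cmp K x pA)) (cmp K iB' (cmp K x' pA')))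
          (madd K (cmp K iC (cmp K y pB)) (cmp K iC' (cmp K y' pB')))"
  using area unfolding additive_realization_def by (elim conjE) assumption

lemma ar2r: "biprod K A A' SA iA iA' pA pA' \<Longrightarrow> biprod K B B' SB iB iB' pB pB' \<Longrightarrow>
        biprod K C C' SC iC iC' pC pC' \<Longrightarrow>
        rlz K C A d x y \<Longrightarrow> rlz K C' A' d' x' y' \<Longrightarrow> cd K x = B \<Longrightarrow> cd K x' = B' \<Longrightarrow>
        rlz K SC SA
          (eadd K SC SA (push K iA SC (pull K pC A d)) (push K iA' SC (pull K pC' A' d')))
          (iB \<cdot> (x \<cdot> pA) \<oplus> iB' \<cdot> (x' \<cdot> pA'))
          (iC \<cdot> (y \<cdot> pB) \<oplus> iC' \<cdot> (y' \<cdot> pB'))"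
  apply (rule ar2[rule_format])
  apply (intro conjI)
  apply assumption+
  done

lemma et4r: "rlz K D A d f f' \<Longrightarrow> rlz K F B d' g g' \<Longrightarrow> cd K f = B \<Longrightarrow> cd K g = C \<Longrightarrow>
     (\<exists>E h h' e1 e2 d''. E \<in> Ob K \<and> h \<in> Hom K A C \<and> h' \<in> Hom K C E \<and>
        e1 \<in> Hom K D E \<and> e2 \<in> Hom K E F \<and>
        h = cmp K g f \<and> cmp K h' g = cmp K e1 f' \<and> cmp K e2 h' = g' \<and>
        rlz K E A d'' h h' \<and>
        rlz K F D (push K f' F d') e1 e2 \<and>
        pull K e1 A d'' = d \<and>
        push K f E d'' = pull K e2 B d')"
  using et4 unfolding ET4_def by blast

lemma sc_ob: "subcat K Z \<Longrightarrow> Z \<subseteq> Ob K" unfolding subcat_def by blast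
lemma sc_iso: "subcat K Z \<Longrightarrow> iso K f \<Longrightarrow> dm K f \<in> Z \<Longrightarrow> cd K f \<in> Z" unfolding subcat_def by blast
lemma sc_sum: "subcat K Z \<Longrightarrow> A \<in> Ob K \<Longrightarrow> B \<in> Ob K \<Longrightarrow> biprod K A B S i1 i2 p1 p2 \<Longrightarrow> S \<in> Z \<Longrightarrow> A \<in> Z"
  unfolding subcat_def by blast

lemma FS: assumes sX: "subcat K X" and eX: "extension_closed K X" and cg: "inj_cogenerator K X W"
  and r: "rlz K C' Kk dl x y" and KX: "Kk \<in> X" and BX: "cd K x \<in> X"
  and v: "\<forall>V\<in>W. ev K C' V"
  shows "C' \<in> X"
proof -
  note D = rD[OF r]
  define B where "B = cd K x"
  obtain K' ep a a' where ce: "rlz K K' Kk ep a a'" "cd K a \<in> W" "K' \<in> X"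
    using cg KX unfolding inj_cogenerator_def by blast
  define W0 where "W0 = cd K a"
  note DE = rD[OF ce(1)]
  have W0o: "W0 \<in> Ob K" using DE W0_def by simp
  have K'o: "K' \<in> Ob K" using DE by simp
  have Bo: "B \<in> Ob K" using D B_def by simp
  have aH: "a \<in> H Kk W0" using DE W0_def by simp
  have "push K a C' dl \<in> Ex K C' W0" using push_in aH D by blast
  hence "push K a C' dl = ezero K C' W0" using v ce(2) W0_def unfolding ev_def by blast
  then obtain g where g: "g \<in> H B W0" "g \<cdot> x = a" using N4[OF r aH] B_def by blast
  obtain N j1 j2 q1 q2 where bN: "biprod K Kk B N j1 j2 q1 q2" using bp_ex D Bo by blast
  obtain M i1 i2 p1 p2 where bM: "biprod K W0 B M i1 i2 p1 p2" using bp_ex W0o Bo by blast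
  note BN = bpD[OF bN] and BM = bpD[OF bM]
  note T = HomE[OF BN(2)] HomE[OF BN(3)] HomE[OF BN(4)] HomE[OF BN(5)]
    HomE[OF BM(2)] HomE[OF BM(3)] HomE[OF BM(4)] HomE[OF BM(5)] HomE[OF g(1)] HomE[OF aH]
    HomE[OF D(4)[folded B_def]] HomE[OF D(5)[folded B_def]] D(1) D(2) Bo W0o K'o HomE[OF DE(5)] BN(1) BM(1)
  define hN where "hN = (j2 \<cdot> x) \<cdot> q1"
  have hN: "hN \<in> H N N" using hN_def cmp_hom BN D(4) B_def by metis
  have hNN: "hN \<cdot> hN = z N N"
  proof -
    have u: "j2 \<cdot> x \<in> H Kk N" using cmp_hom BN D(4) B_def by metis
    have "q1 \<cdot> (j2 \<cdot> x) = z Kk Kk" using T assoc_rel[OF BN(9)] by (simp add: ms)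
    thus ?thesis using SQZ[OF u BN(4)] hN_def by simp
  qed
  note AN = AUT[OF hN hNN]
  have thN: "idm K N \<oplus> hN \<in> H N N" using addhom hN id_hom BN(1) by blast
  have thN': "idm K N \<oplus> mneg N N hN \<in> H N N" using addhom mneg[OF hN] id_hom BN(1) by blast
  have sN: "rlz K B Kk (ezero K B Kk) j1 q2" using split_rlz[OF D(2) Bo bN] .
  have cj1: "cd K j1 = N" using T by simp
  have t1: "rlz K B Kk (ezero K B Kk) ((idm K N \<oplus> hN) \<cdot> j1) (q2 \<cdot> (idm K N \<oplus> mneg N N hN))"
    using TR[OF sN] thN thN' AN cj1 by simp
  have bZ: "biprod K K' Z0 K' (idm K K') (z Z0 K') (idm K K') (z K' Z0)" using bp_Z0r K'o .
  have tB: "rlz K Z0 B (ezero K Z0 B) (idm K B) (z B Z0)" using tri0r Bo .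
  define dsum where "dsum = eadd K K' N (push K j1 K' (pull K (idm K K') Kk ep)) (push K j2 K' (pull K (z K' Z0) B (ezero K Z0 B)))"
  have t2: "rlz K K' N dsum
          (i1 \<cdot> (a \<cdot> q1) \<oplus> i2 \<cdot> (idm K B \<cdot> q2))
          (idm K K' \<cdot> (a' \<cdot> p1) \<oplus> z Z0 K' \<cdot> (z B Z0 \<cdot> p2))"
    using ar2r[OF bN bM bZ ce(1) tB] W0_def cd_id[OF Bo] unfolding dsum_def by simp
  define psi where "psi = i1 \<cdot> (a \<cdot> q1) \<oplus> i2 \<cdot> (idm K B \<cdot> q2)"
  have cpsi: "cd K psi = M" unfolding psi_def using T by (simp add: ms)
  have cs: "cd K ((idm K N \<oplus> hN) \<cdot> j1) = N" using T hN_def by (simp add: ms)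
  obtain E1 h h' e1 e2 d'' where E1: "h = psi \<cdot> ((idm K N \<oplus> hN) \<cdot> j1)" "rlz K E1 Kk d'' h h'"
      "rlz K K' B (push K (q2 \<cdot> (idm K N \<oplus> mneg N N hN)) K' dsum) e1 e2" "e1 \<in> H B E1"
    using et4r[OF t1 t2[folded psi_def] cs cpsi] by blast
  have E1X: "E1 \<in> X"
  proof -
    have "cd K e1 \<in> X" using eX E1(3) BX ce(3) B_def unfolding extension_closed_def by blast
    thus ?thesis using E1(4) HomD by metis
  qed
  have hval: "h = i1 \<cdot> a \<oplus> i2 \<cdot> x" using E1(1) T BN(6-9) assoc_rel[OF BN(6)] assoc_rel[OF BN(7)]
      assoc_rel[OF BN(8)] assoc_rel[OF BN(9)] unfolding psi_def hN_def by (simp add: ms)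
  define hM where "hM = (i1 \<cdot> g) \<cdot> p2"
  have hM: "hM \<in> H M M" using hM_def cmp_hom BM g(1) by metis
  have hMM: "hM \<cdot> hM = z M M"
  proof -
    have u: "i1 \<cdot> g \<in> H B M" using cmp_hom BM g(1) by metis
    have "p2 \<cdot> (i1 \<cdot> g) = z B B" using T assoc_rel[OF BM(8)] by (simp add: ms)
    thus ?thesis using SQZ[OF u BM(5)] hM_def by simp
  qed
  note AM = AUT[OF hM hMM]
  have thM: "idm K M \<oplus> hM \<in> H M M" using addhom hM id_hom BM(1) by blast
  have thM': "idm K M \<oplus> mneg M M hM \<in> H M M" using addhom mneg[OF hM] id_hom BM(1) by blast
  have sM: "rlz K W0 B (ezero K W0 B) i2 p1" using split_rlz[OF Bo W0o bp_swap[OF bM]] .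
  have ci2: "cd K i2 = M" using T by simp
  have t3: "rlz K W0 B (ezero K W0 B) ((idm K M \<oplus> hM) \<cdot> i2) (p1 \<cdot> (idm K M \<oplus> mneg M M hM))"
    using TR[OF sM] thM thM' AM ci2 by simp
  have cchi: "cd K ((idm K M \<oplus> hM) \<cdot> i2) = M" using T hM_def by (simp add: ms)
  obtain E2 h2 h2' e1' e2' d2'' where E2: "h2 = ((idm K M \<oplus> hM) \<cdot> i2) \<cdot> x" "rlz K E2 Kk d2'' h2 h2'"
      "rlz K W0 C' (push K y W0 (ezero K W0 B)) e1' e2'" "e1' \<in> H C' E2"
    using et4r[OF r t3 B_def[symmetric] cchi] by blast
  have h2val: "h2 = i2 \<cdot> x \<oplus> i1 \<cdot> a" using E2(1) T BM(6-9) assoc_rel[OF BM(6)] assoc_rel[OF BM(7)]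
      assoc_rel[OF BM(8)] assoc_rel[OF BM(9)] g(2) unfolding hM_def by (simp add: ms)
  have hh: "h2 = h" using h2val hval add_comm_ms T by (simp add: ms)
  have "push K y W0 (ezero K W0 B) = ezero K W0 C'" using push_ez D(5) W0o B_def by blast
  hence sp: "rlz K W0 C' (ezero K W0 C') e1' e2'" using E2(3) by simp
  obtain S s1 s2 r1 r2 b where Sb: "biprod K C' W0 S s1 s2 r1 r2" "b \<in> H (cd K e1') S" "iso K b"
    using SPL[OF sp] by blast
  obtain cc where cc: "cc \<in> H E1 E2" "iso K cc" using CU[OF E1(2) E2(2)[unfolded hh]] by blast
  have "E2 \<in> X" using sc_iso[OF sX cc(2)] cc(1) E1X HomD by metis
  hence "S \<in> X" using sc_iso[OF sX Sb(3)] Sb(2) E2(4) HomD by metis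
  thus ?thesis using sc_sum[OF sX D(1) W0o Sb(1)] by blast
qed

end



context xc2 begin

lemma ev_iff2: assumes "X \<in> Ob K" "V \<in> Ob K"
  shows "ext_vanish K i X V \<longleftrightarrow> ev K (pc K X (i - 1)) V"
  using ev_iff[OF assms] EQ[OF pc_chain[OF assms(1)] ic_chain[OF assms(2)]] assms by simp

lemma inhat_ob: "Z \<subseteq> Ob K \<Longrightarrow> in_hat K Z n C \<Longrightarrow> C \<in> Ob K"
proof -
  assume Z: "Z \<subseteq> Ob K" and h: "in_hat K Z n C"
  then obtain Ks where Ks: "Ks 0 = C" "Ks n \<in> Z" "\<forall>i<n. \<exists>d x y. rlz K (Ks i) (Ks (Suc i)) d x y \<and> cd K x \<in> Z"
    unfolding in_hat_def by blast
  show ?thesis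
  proof (cases n)
    case 0
    then show ?thesis using Ks Z by auto
  next
    case (Suc m)
    then obtain d x y where "rlz K (Ks 0) (Ks (Suc 0)) d x y" using Ks(3) by blast
    then show ?thesis using rD Ks(1) by blast
  qed
qed

lemma inhat_suc: "in_hat K Z (Suc n) C \<Longrightarrow>
   \<exists>C1 d x y. rlz K C C1 d x y \<and> cd K x \<in> Z \<and> in_hat K Z n C1"
proof -
  assume "in_hat K Z (Suc n) C"
  then obtain Ks where Ks: "Ks 0 = C" "Ks (Suc n) \<in> Z" "\<forall>i<Suc n. \<exists>d x y. rlz K (Ks i) (Ks (Suc i)) d x y \<and> cd K x \<in> Z"
    unfolding in_hat_def by blast
  obtain d x y where t: "rlz K (Ks 0) (Ks (Suc 0)) d x y" "cd K x \<in> Z" using Ks(3) by blast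
  have "in_hat K Z n (Ks 1)" unfolding in_hat_def
    by (rule exI[of _ "\<lambda>j. Ks (Suc j)"]) (use Ks in auto)
  thus ?thesis using t Ks(1) by auto
qed

end

locale xc3 = xc2 +
  fixes X W
  assumes sX: "subcat K X" and sW: "subcat K W" and eX: "extension_closed K X"
    and cg: "inj_cogenerator K X W"
begin

lemma XOb: "X \<subseteq> Ob K" using sc_ob sX by blast
lemma WX: "W \<subseteq> X" using cg unfolding inj_cogenerator_def by blast
lemma WOb: "W \<subseteq> Ob K" using WX XOb by blast

lemma CG: "A \<in> X \<Longrightarrow> V \<in> W \<Longrightarrow> ev K A (ic K V k)"
proof -
  assume A: "A \<in> X" and V: "V \<in> W"
  have "ext_vanish K (Suc k) A V" using cg A V unfolding inj_cogenerator_def by auto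
  thus ?thesis using ev_iff A V XOb WOb by force
qed

lemma P: "in_hat K X n C \<Longrightarrow> V \<in> W \<Longrightarrow> n \<le> k \<Longrightarrow> ev K C (ic K V k)"
proof (induction n arbitrary: C k)
  case 0
  then have "C \<in> X" unfolding in_hat_def by auto
  then show ?case using CG 0 by blast
next
  case (Suc n)
  obtain C1 d x y where t: "rlz K C C1 d x y" "cd K x \<in> X" "in_hat K X n C1"
    using inhat_suc[OF Suc.prems(1)] by blast
  obtain k' where k: "k = Suc k'" "n \<le> k'" using Suc.prems(3) by (cases k) auto
  have Vo: "V \<in> Ob K" using Suc.prems(2) WOb by blast
  obtain d' x' y' where t': "rlz K (ic K V (Suc k')) (ic K V k') d' x' y'" "injective K (cd K x')"
    using ic_tri[OF Vo] by blast
  note D = rD[OF t(1)]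
  have "Ex K C (ic K V (Suc k')) = {ezero K C (ic K V (Suc k'))}"
  proof (rule GL[OF t(1) t'(1)])
    show "Ex K (cd K x) (ic K V (Suc k')) = {ezero K (cd K x) (ic K V (Suc k'))}"
      using CG[OF t(2) Suc.prems(2)] unfolding ev_def .
    show "Ex K C (cd K x') = {ezero K C (cd K x')}" using inj_ev[OF t'(2) D(1)] unfolding ev_def .
    show "Ex K C1 (ic K V k') = {ezero K C1 (ic K V k')}" using Suc.IH[OF t(3) Suc.prems(2) k(2)]
      unfolding ev_def .
  qed
  thus ?case using k unfolding ev_def by simp
qed

lemma Q0: "in_hat K X n C \<Longrightarrow> V \<in> W \<Longrightarrow> n \<le> j \<Longrightarrow> ev K (pc K C j) V"
proof -
  assume h: "in_hat K X n C" and V: "V \<in> W" and j: "n \<le> j"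
  have Co: "C \<in> Ob K" using inhat_ob[OF XOb h] .
  have Vo: "V \<in> Ob K" using V WOb by blast
  show ?thesis using P[OF h V j] EQ[OF pc_chain[OF Co] ic_chain[OF Vo]] Co Vo by simp
qed

lemma Q: "in_hat K W m V \<Longrightarrow> in_hat K X n C \<Longrightarrow> n \<le> j \<Longrightarrow> ev K (pc K C j) V"
proof (induction m arbitrary: V j)
  case 0
  then have "V \<in> W" unfolding in_hat_def by auto
  then show ?case using Q0 0 by blast
next
  case (Suc m)
  obtain V1 d x y where t: "rlz K V V1 d x y" "cd K x \<in> W" "in_hat K W m V1"
    using inhat_suc[OF Suc.prems(1)] by blast
  have Co: "C \<in> Ob K" using inhat_ob[OF XOb Suc.prems(2)] .
  obtain d' p p' where t': "rlz K (pc K C j) (pc K C (Suc j)) d' p p'" "projective K (cd K p)"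
    using pc_step[OF Co] by blast
  note D = rD[OF t(1)] and D' = rD[OF t'(1)]
  have "Ex K (pc K C j) V = {ezero K (pc K C j) V}"
  proof (rule GL[OF t'(1) t(1)])
    show "Ex K (cd K p) V = {ezero K (cd K p) V}" using proj_ev[OF t'(2) D(1)] unfolding ev_def .
    show "Ex K (pc K C j) (cd K x) = {ezero K (pc K C j) (cd K x)}"
      using Q0[OF Suc.prems(2) t(2) Suc.prems(3)] unfolding ev_def .
    show "Ex K (pc K C (Suc j)) V1 = {ezero K (pc K C (Suc j)) V1}"
      using Suc.IH[OF t(3) Suc.prems(2), of "Suc j"] Suc.prems(3) unfolding ev_def by simp
  qed
  thus ?case unfolding ev_def .
qed

lemma vanish_hat: "in_hat K X n C \<Longrightarrow> V \<in> hat K W \<Longrightarrow> n < i \<Longrightarrow> ext_vanish K i C V"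
proof -
  assume h: "in_hat K X n C" and V: "V \<in> hat K W" and i: "n < i"
  obtain m where m: "in_hat K W m V" using V unfolding hat_def by blast
  have Co: "C \<in> Ob K" using inhat_ob[OF XOb h] .
  have Vo: "V \<in> Ob K" using inhat_ob[OF WOb m] .
  show ?thesis using Q[OF m h, of "i - 1"] i ev_iff2[OF Co Vo] by simp
qed

lemma W_hat: "W \<subseteq> hat K W"
proof
  fix V assume "V \<in> W"
  hence "in_hat K W 0 V" unfolding in_hat_def by (intro exI[of _ "\<lambda>_. V"]) auto
  thus "V \<in> hat K W" unfolding hat_def by blast
qed

lemma R: assumes h: "in_hat K X (Suc s) C" and v: "\<forall>V\<in>W. \<forall>i>m. ext_vanish K i C V" and sm: "m \<le> s"
  shows "in_hat K X s C"
proof -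
  obtain Ks where Ks: "Ks 0 = C" "Ks (Suc s) \<in> X" "\<forall>i<Suc s. \<exists>d x y. rlz K (Ks i) (Ks (Suc i)) d x y \<and> cd K x \<in> X"
    using h unfolding in_hat_def by blast
  have Co: "C \<in> Ob K" using inhat_ob[OF XOb h] .
  have SH: "j \<le> s \<Longrightarrow> V \<in> W \<Longrightarrow> ev K (Ks j) (ic K V (s - j))" for j V
  proof (induction j)
    case 0
    have Vo: "V \<in> Ob K" using 0 WOb by blast
    have "ext_vanish K (Suc s) C V" using v 0 sm by auto
    then show ?case using ev_iff[OF Co Vo] Ks(1) by simp
  next
    case (Suc j)
    have Vo: "V \<in> Ob K" using Suc WOb by blast
    have js: "j < Suc s" using Suc.prems(1) by simp
    obtain d x y where t: "rlz K (Ks j) (Ks (Suc j)) d x y" "cd K x \<in> X" using Ks(3) js by blast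
    obtain l where l: "s - j = Suc l" "s - Suc j = l" proof -
      have "s - j = Suc (s - Suc j)" using Suc.prems(1) by simp
      thus ?thesis using that by blast
    qed
    obtain d' x' y' where t': "rlz K (ic K V (Suc l)) (ic K V l) d' x' y'" "injective K (cd K x')"
      using ic_tri[OF Vo] by blast
    note D = rD[OF t(1)]
    have "Ex K (Ks (Suc j)) (ic K V l) = {ezero K (Ks (Suc j)) (ic K V l)}"
    proof (rule GL'[OF t(1) t'(1)])
      show "Ex K (Ks (Suc j)) (cd K x') = {ezero K (Ks (Suc j)) (cd K x')}"
        using inj_ev[OF t'(2) D(2)] unfolding ev_def .
      show "Ex K (cd K x) (ic K V l) = {ezero K (cd K x) (ic K V l)}"
        using CG[OF t(2) Suc.prems(2)] unfolding ev_def .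
      show "Ex K (Ks j) (ic K V (Suc l)) = {ezero K (Ks j) (ic K V (Suc l))}"
        using Suc.IH Suc.prems l unfolding ev_def by simp
    qed
    then show ?case using l unfolding ev_def by simp
  qed
  obtain d x y where t: "rlz K (Ks s) (Ks (Suc s)) d x y" "cd K x \<in> X" using Ks(3) by auto
  have "Ks s \<in> X"
  proof (rule FS[OF sX eX cg t(1) Ks(2) t(2)])
    show "\<forall>V\<in>W. ev K (Ks s) V"
    proof
      fix V assume "V \<in> W"
      thus "ev K (Ks s) V" using SH[of s V] by simp
    qed
  qed
  thus ?thesis unfolding in_hat_def using Ks by (intro exI[of _ Ks]) auto
qed

lemma main: assumes C: "C \<in> hat K X"
  shows "pd K (hat K W) C = pd K W C \<and> pd K W C = resdim K X C"
proof -
  have ex: "\<exists>n. in_hat K X n C" using C unfolding hat_def by blast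
  define n where "n = (LEAST n. in_hat K X n C)"
  have hn: "in_hat K X n C" unfolding n_def using ex by (rule LeastI_ex)
  have mn: "\<And>m. in_hat K X m C \<Longrightarrow> n \<le> m" unfolding n_def by (rule Least_le)
  have rd: "resdim K X C = enat n" unfolding resdim_def n_def using ex by simp
  have low: "n \<le> m" if v: "\<forall>V\<in>W. \<forall>i>m. ext_vanish K i C V" for m
  proof (rule ccontr)
    assume "\<not> n \<le> m"
    then obtain s where s: "n = Suc s" "m \<le> s" by (cases n) auto
    have "in_hat K X s C" using R[OF hn[unfolded s(1)] v s(2)] .
    thus False using mn s(1) by fastforce
  qed
  have vW: "\<forall>V\<in>W. \<forall>i>n. ext_vanish K i C V" using vanish_hat[OF hn] W_hat by blast
  have vH: "\<forall>V\<in>hat K W. \<forall>i>n. ext_vanish K i C V" using vanish_hat[OF hn] by blast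
  have l1: "(LEAST m. \<forall>V\<in>W. \<forall>i>m. ext_vanish K i C V) = n"
    by (rule Least_equality) (use vW low in auto)
  have l2: "(LEAST m. \<forall>V\<in>hat K W. \<forall>i>m. ext_vanish K i C V) = n"
  proof (rule Least_equality)
    show "\<forall>V\<in>hat K W. \<forall>i>n. ext_vanish K i C V" using vH .
    fix m assume "\<forall>V\<in>hat K W. \<forall>i>m. ext_vanish K i C V"
    hence "\<forall>V\<in>W. \<forall>i>m. ext_vanish K i C V" using W_hat by blast
    thus "n \<le> m" using low by blast
  qed
  have p1: "pd K W C = enat n" unfolding pd_def using vW l1 by auto
  have p2: "pd K (hat K W) C = enat n" unfolding pd_def using vH l2 by auto
  show ?thesis using p1 p2 rd by simp
qed

end

theorem proposition3p12:
  fixes K :: "('o,'m,'e) ecat" and X W :: "'o set" and C :: 'o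
  assumes "extriangulated K"
    and "enough_projectives K" and "enough_injectives K"
    and "subcat K X" and "subcat K W"
    and "extension_closed K X"
    and "inj_cogenerator K X W"
    and "C \<in> hat K X"
  shows "pd K (hat K W) C = pd K W C \<and> pd K W C = resdim K X C"
proof -
  interpret xc3 K X W
    using assms unfolding xc3_def xc2_def xc_def xc2_axioms_def xc3_axioms_def by blast
  show ?thesis using main assms(8) .
qed


end
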